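(* Let $1\le q\le p<\infty$, let $X$ be a compact manifold with a finite positive Borel measure $\mu$, let $r>0$, and fix $f\in\mathbb S^+_{L^{p/q}}(\mu,r)$. Then there exists $C=C(\mu,p,q,f,r)>0$ such that for all $f_0,f_1\in\mathbb S^+_{L^{p/q}}(\mu,r)$, $$\frac{C}{d^{\mathbb S^+}_{p,q}(f,f_0)+d^{\mathbb S^+}_{p,q}(f,f_1)+1}\,d^{\mathbb S^+}_{p,q}(f_0,f_1)\le\Big(\frac1{\mu(X)}\int_X|f_0-f_1|^p\mu\Big)^{1/p}\le d^{\mathbb S^+}_{p,q}(f_0,f_1).$$
   Context: On $C^\infty(X)$ consider the trivial $L^p$-Finsler metric $\|\psi\|_{p,f}=\big(\frac1{\mu(X)}\int_X|\psi|^p\mu\big)^{1/p}$ for $\psi\in T_fC^\infty(X)\simeq C^\infty(X)$. The positive octant of the $L^{p/q}$-sphere of radius $r$ is $\mathbb S^+_{L^{p/q}}(\mu,r)=\{f\in C^\infty(X):f>0,\ \frac1{\mu(X)}\int_X f^{p/q}\mu=r^{p/q}\}$, a smooth submanifold of $C^\infty(X)$; $d^{\mathbb S^+}_{p,q}$ denotes the path-length distance on it obtained by pulling back $\|\cdot\|_{p,\cdot}$, i.e. the infimum of $\int_0^1\|\dot\gamma_t\|_{p,\gamma_t}dt$ over piecewise smooth curves $\gamma$ in $\mathbb S^+_{L^{p/q}}(\mu,r)$ joining the two points. *)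

theory Defs
  imports "HOL-Analysis.Analysis"
begin

fun Ck_on :: "nat \<Rightarrow> 'n::euclidean_space set \<Rightarrow> ('n \<Rightarrow> real) \<Rightarrow> bool" where
  "Ck_on 0 S g = continuous_on S g"
| "Ck_on (Suc k) S g =
     ((\<forall>x\<in>S. g differentiable (at x)) \<and>
      (\<forall>i\<in>Basis. Ck_on k S (\<lambda>x. frechet_derivative g (at x) i)))"

definition smooth_on_open :: "'n::euclidean_space set \<Rightarrow> ('n \<Rightarrow> real) \<Rightarrow> bool" where
  "smooth_on_open S g \<longleftrightarrow> open S \<and> (\<forall>k. Ck_on k S g)"

definition smooth_atlas :: "'a::t2_space set \<Rightarrow> ('a set \<times> ('a \<Rightarrow> 'n::euclidean_space)) set \<Rightarrow> bool" where
  "smooth_atlas X A \<longleftrightarrow>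
     (\<forall>(U,\<phi>)\<in>A. openin (top_of_set X) U \<and> open (\<phi> ` U) \<and>
                 (\<exists>\<psi>. homeomorphism U (\<phi> ` U) \<phi> \<psi>)) \<and>
     X = (\<Union>(U,\<phi>)\<in>A. U) \<and>
     (\<forall>(U,\<phi>)\<in>A. \<forall>(V,\<psi>)\<in>A. \<forall>i\<in>Basis.
        smooth_on_open (\<phi> ` (U \<inter> V)) (\<lambda>y. \<psi> (inv_into U \<phi> y) \<bullet> i))"

definition compact_smooth_manifold :: "'a::t2_space set \<Rightarrow> ('a set \<times> ('a \<Rightarrow> 'n::euclidean_space)) set \<Rightarrow> bool" where
  "compact_smooth_manifold X A \<longleftrightarrow> compact X \<and> smooth_atlas X A"

text \<open>C^\<infinity>(X): smooth real functions on X (extended by 0 outside X, so that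
elements of C^\<infinity>(X) are determined by their values on X).\<close>

definition Cinf :: "'a set \<Rightarrow> ('a set \<times> ('a \<Rightarrow> 'n::euclidean_space)) set \<Rightarrow> ('a \<Rightarrow> real) set" where
  "Cinf X A = {f. (\<forall>x. x \<notin> X \<longrightarrow> f x = 0) \<and>
                  (\<forall>(U,\<phi>)\<in>A. smooth_on_open (\<phi> ` U) (\<lambda>y. f (inv_into U \<phi> y)))}"

definition smooth_curve_on :: "'a set \<Rightarrow> ('a set \<times> ('a \<Rightarrow> 'n::euclidean_space)) set \<Rightarrow> real \<Rightarrow> real
    \<Rightarrow> (real \<Rightarrow> 'a \<Rightarrow> real) \<Rightarrow> bool" where
  "smooth_curve_on X A a b \<gamma> \<longleftrightarrow>
     (\<forall>(U,\<phi>)\<in>A. \<exists>T g. open T \<and> {a..b} \<subseteq> T \<and> smooth_on_open (T \<times> \<phi> ` U) g \<and>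
        (\<forall>t\<in>{a..b}. \<forall>y\<in>\<phi> ` U. g (t, y) = \<gamma> t (inv_into U \<phi> y)))"

definition piecewise_smooth_curve :: "'a set \<Rightarrow> ('a set \<times> ('a \<Rightarrow> 'n::euclidean_space)) set
    \<Rightarrow> (real \<Rightarrow> 'a \<Rightarrow> real) \<Rightarrow> bool" where
  "piecewise_smooth_curve X A \<gamma> \<longleftrightarrow>
     (\<exists>D. finite D \<and> {0,1} \<subseteq> D \<and> D \<subseteq> {0..1} \<and>
        (\<forall>a\<in>D. \<forall>b\<in>D. a < b \<and> {a<..<b} \<inter> D = {} \<longrightarrow> smooth_curve_on X A a b \<gamma>))"

definition Lp_norm :: "'a measure \<Rightarrow> real \<Rightarrow> ('a \<Rightarrow> real) \<Rightarrow> real" where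
  "Lp_norm M p \<psi> =
     ((1 / measure M (space M)) * (\<integral>x. \<bar>\<psi> x\<bar> powr p \<partial>M)) powr (1 / p)"

definition sphere_plus :: "'a set \<Rightarrow> ('a set \<times> ('a \<Rightarrow> 'n::euclidean_space)) set \<Rightarrow> 'a measure
    \<Rightarrow> real \<Rightarrow> real \<Rightarrow> real \<Rightarrow> ('a \<Rightarrow> real) set" where
  "sphere_plus X A M p q r =
     {f \<in> Cinf X A. (\<forall>x\<in>X. f x > 0) \<and>
        (1 / measure M (space M)) * (\<integral>x. f x powr (p / q) \<partial>M) = r powr (p / q)}"

text \<open>Velocity of a curve at time t: the t-derivative, pointwise on X (irrelevant at the
finitely many break points, which are a null set for the integral in t).\<close>

definition curve_velocity :: "(real \<Rightarrow> 'a \<Rightarrow> real) \<Rightarrow> real \<Rightarrow> 'a \<Rightarrow> real" where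
  "curve_velocity \<gamma> t x = vector_derivative (\<lambda>s. \<gamma> s x) (at t)"

definition curve_length :: "'a measure \<Rightarrow> real \<Rightarrow> (real \<Rightarrow> 'a \<Rightarrow> real) \<Rightarrow> real" where
  "curve_length M p \<gamma> = integral {0..1} (\<lambda>t. Lp_norm M p (curve_velocity \<gamma> t))"

definition dist_sphere :: "'a set \<Rightarrow> ('a set \<times> ('a \<Rightarrow> 'n::euclidean_space)) set \<Rightarrow> 'a measure
    \<Rightarrow> real \<Rightarrow> real \<Rightarrow> real \<Rightarrow> ('a \<Rightarrow> real) \<Rightarrow> ('a \<Rightarrow> real) \<Rightarrow> real" where
  "dist_sphere X A M p q r f0 f1 =
     Inf {curve_length M p \<gamma> | \<gamma>.
            piecewise_smooth_curve X A \<gamma> \<and>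
            (\<forall>t\<in>{0..1}. \<gamma> t \<in> sphere_plus X A M p q r) \<and>
            \<gamma> 0 = f0 \<and> \<gamma> 1 = f1}"

end

theory Submission
  imports Defs
begin

lemma ck_cong:
  assumes "open S" "\<And>x. x \<in> S \<Longrightarrow> g x = h x" "Ck_on k S g"
  shows "Ck_on k S h"
  using assms
proof (induction k arbitrary: g h)
  case 0
  then show ?case using continuous_on_cong by auto
next
  case (Suc k)
  have d: "\<forall>x\<in>S. h differentiable (at x)"
  proof
    fix x assume x: "x \<in> S"
    have "g differentiable (at x)" using Suc.prems x by auto
    then obtain g' where "(g has_derivative g') (at x)" unfolding differentiable_def by blast
    from has_derivative_transform_within_open[OF this Suc.prems(1) x] Suc.prems(2)
    have "(h has_derivative g') (at x)" by blast
    then show "h differentiable (at x)" unfolding differentiable_def by blast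
  qed
  have p: "Ck_on k S (\<lambda>x. frechet_derivative h (at x) i)" if i: "i \<in> Basis" for i
  proof (rule Suc.IH[of "\<lambda>x. frechet_derivative g (at x) i"])
    show "open S" by fact
    show "Ck_on k S (\<lambda>x. frechet_derivative g (at x) i)" using Suc.prems i by auto
    fix x assume x: "x \<in> S"
    have "g differentiable (at x)" using Suc.prems x by auto
    then show "frechet_derivative g (at x) i = frechet_derivative h (at x) i"
      using frechet_derivative_transform_within_open[OF _ Suc.prems(1) x, of g h] Suc.prems(2) by simp
  qed
  show ?case using d p by simp
qed

lemma ck_mono: "Ck_on (Suc k) S g \<Longrightarrow> Ck_on k S g"
proof (induction k arbitrary: g)
  case 0
  then show ?case
    by (auto intro!: continuous_at_imp_continuous_on differentiable_imp_continuous_within)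
next
  case (Suc k)
  then show ?case by auto
qed

lemma ck_mono_add: "Ck_on (k + d) S g \<Longrightarrow> Ck_on k S g"
proof (induction d)
  case 0 then show ?case by simp
next
  case (Suc d)
  then show ?case using ck_mono[of "k + d" S g] by simp
qed

lemma ck_mono_le: "Ck_on n S g \<Longrightarrow> k \<le> n \<Longrightarrow> Ck_on k S g"
  using ck_mono_add[of k "n - k" S g] by simp

lemma ck_const: "Ck_on k S (\<lambda>x. c)"
proof (induction k arbitrary: c)
  case 0 then show ?case by simp
next
  case (Suc k) then show ?case by simp
qed

lemma ck_add:
  assumes "open S" "Ck_on k S g" "Ck_on k S h"
  shows "Ck_on k S (\<lambda>x. g x + h x)"
  using assms
proof (induction k arbitrary: g h)
  case 0 then show ?case by (auto intro: continuous_on_add)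
next
  case (Suc k)
  have d: "\<forall>x\<in>S. (\<lambda>x. g x + h x) differentiable (at x)"
    using Suc.prems by (auto intro: differentiable_add)
  have p: "Ck_on k S (\<lambda>x. frechet_derivative (\<lambda>x. g x + h x) (at x) i)" if i: "i \<in> Basis" for i
  proof (rule ck_cong[OF \<open>open S\<close>])
    show "Ck_on k S (\<lambda>x. frechet_derivative g (at x) i + frechet_derivative h (at x) i)"
      using Suc.IH Suc.prems i by auto
    fix x assume x: "x \<in> S"
    have "g differentiable (at x)" "h differentiable (at x)" using Suc.prems x by auto
    then have "((\<lambda>x. g x + h x) has_derivative
       (\<lambda>v. frechet_derivative g (at x) v + frechet_derivative h (at x) v)) (at x)"
      by (intro has_derivative_add) (auto simp: frechet_derivative_works)
    from frechet_derivative_at[OF this] show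
      "frechet_derivative g (at x) i + frechet_derivative h (at x) i =
       frechet_derivative (\<lambda>x. g x + h x) (at x) i" by metis
  qed
  show ?case using d p by simp
qed

lemma ck_mult:
  assumes "open S" "Ck_on k S g" "Ck_on k S h"
  shows "Ck_on k S (\<lambda>x. g x * h x)"
  using assms
proof (induction k arbitrary: g h)
  case 0 then show ?case by (auto intro: continuous_on_mult)
next
  case (Suc k)
  have d: "\<forall>x\<in>S. (\<lambda>x. g x * h x) differentiable (at x)"
    using Suc.prems by (auto intro: differentiable_mult)
  have p: "Ck_on k S (\<lambda>x. frechet_derivative (\<lambda>x. g x * h x) (at x) i)" if i: "i \<in> Basis" for i
  proof (rule ck_cong[OF \<open>open S\<close>])
    have gk: "Ck_on k S g" "Ck_on k S h" using Suc.prems ck_mono by blast+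
    show "Ck_on k S (\<lambda>x. g x * frechet_derivative h (at x) i + frechet_derivative g (at x) i * h x)"
      using Suc.IH Suc.prems i gk by (intro ck_add) auto
    fix x assume x: "x \<in> S"
    have "g differentiable (at x)" "h differentiable (at x)" using Suc.prems x by auto
    then have "((\<lambda>x. g x * h x) has_derivative
       (\<lambda>v. g x * frechet_derivative h (at x) v + frechet_derivative g (at x) v * h x)) (at x)"
      by (intro has_derivative_mult) (auto simp: frechet_derivative_works)
    from frechet_derivative_at[OF this] show
      "g x * frechet_derivative h (at x) i + frechet_derivative g (at x) i * h x =
       frechet_derivative (\<lambda>x. g x * h x) (at x) i" by metis
  qed
  show ?case using d p by simp
qed

lemma ck_cmult: "open S \<Longrightarrow> Ck_on k S g \<Longrightarrow> Ck_on k S (\<lambda>x. c * g x)"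
  using ck_mult[OF _ ck_const] by blast

lemma ck_sum:
  assumes "open S" "finite I" "\<And>j. j \<in> I \<Longrightarrow> Ck_on k S (g j)"
  shows "Ck_on k S (\<lambda>x. \<Sum>j\<in>I. g j x)"
  using assms(2,3)
proof (induction I rule: finite_induct)
  case empty then show ?case by (simp add: ck_const)
next
  case (insert a I)
  then show ?case by (simp add: ck_add[OF assms(1)])
qed

lemma real_linear_apply: "linear (L::real \<Rightarrow> real) \<Longrightarrow> L y = y * L 1"
  by (metis linear_scale mult.commute real_scaleR_def mult.right_neutral)

lemma ck_comp:
  fixes \<phi> :: "real \<Rightarrow> real"
  assumes "open S" "open V" "Ck_on k V \<phi>" "Ck_on k S g" "g ` S \<subseteq> V"
  shows "Ck_on k S (\<lambda>x. \<phi> (g x))"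
  using assms(3-5)
proof (induction k arbitrary: \<phi> g)
  case 0 then show ?case
    by (auto intro: continuous_on_compose2)
next
  case (Suc k)
  have d: "\<forall>x\<in>S. (\<lambda>x. \<phi> (g x)) differentiable (at x)"
  proof
    fix x assume x: "x \<in> S"
    have "g differentiable (at x)" "\<phi> differentiable (at (g x))" using Suc.prems x by auto
    from differentiable_chain_at[OF this] show "(\<lambda>x. \<phi> (g x)) differentiable (at x)"
      by (simp add: o_def)
  qed
  have p: "Ck_on k S (\<lambda>x. frechet_derivative (\<lambda>x. \<phi> (g x)) (at x) i)" if i: "i \<in> Basis" for i
  proof (rule ck_cong[OF \<open>open S\<close>])
    have gk: "Ck_on k S g" using Suc.prems ck_mono by blast
    have pk: "Ck_on k V (\<lambda>z. frechet_derivative \<phi> (at z) 1)" using Suc.prems by simp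
    show "Ck_on k S (\<lambda>x. frechet_derivative g (at x) i * frechet_derivative \<phi> (at (g x)) 1)"
      using Suc.IH[OF pk gk] Suc.prems i by (intro ck_mult \<open>open S\<close>) auto
    fix x assume x: "x \<in> S"
    have dg: "g differentiable (at x)" and dp: "\<phi> differentiable (at (g x))" using Suc.prems x by auto
    have "frechet_derivative (\<lambda>x. \<phi> (g x)) (at x) i
        = frechet_derivative \<phi> (at (g x)) (frechet_derivative g (at x) i)"
      using frechet_derivative_compose[OF dg dp] by (simp add: o_def)
    also have "\<dots> = frechet_derivative g (at x) i * frechet_derivative \<phi> (at (g x)) 1"
      by (rule real_linear_apply[OF linear_frechet_derivative[OF dp]])
    finally show "frechet_derivative g (at x) i * frechet_derivative \<phi> (at (g x)) 1 =
       frechet_derivative (\<lambda>x. \<phi> (g x)) (at x) i" by simp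
  qed
  show ?case using d p by simp
qed

lemma ck_powr: "Ck_on k {0<..} (\<lambda>z::real. z powr c)"
proof (induction k arbitrary: c)
  case 0 then show ?case
    by (simp, rule continuous_at_imp_continuous_on) (auto intro!: DERIV_isCont has_real_derivative_powr)
next
  case (Suc k)
  have dd: "((\<lambda>z. z powr c) has_derivative (\<lambda>h. (c * z powr (c - 1)) * h)) (at z)" if "z > 0" for z
    using has_real_derivative_powr[OF that, of c] by (simp add: has_field_derivative_def)
  have d: "\<forall>x\<in>{0<..}. (\<lambda>z::real. z powr c) differentiable (at x)"
    using dd by (auto simp: differentiable_def)
  have p: "Ck_on k {0<..} (\<lambda>x. frechet_derivative (\<lambda>z. z powr c) (at x) 1)"
  proof (rule ck_cong[of "{0<..}"])
    show "Ck_on k {0<..} (\<lambda>z. c * z powr (c - 1))" by (rule ck_cmult[OF open_greaterThan Suc.IH])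
    fix x :: real assume "x \<in> {0<..}"
    then have "(\<lambda>h. (c * x powr (c - 1)) * h) = frechet_derivative (\<lambda>z. z powr c) (at x)"
      using frechet_derivative_at[OF dd[of x]] by simp
    then show "c * x powr (c - 1) = frechet_derivative (\<lambda>z. z powr c) (at x) 1"
      by (metis mult_1_right)
  qed auto
  show ?case using d p by simp
qed

lemma ck_linear_comp:
  fixes L :: "'m::euclidean_space \<Rightarrow> 'n::euclidean_space"
  assumes L: "linear L" and S: "open S" and S': "open S'" and LS: "L ` S' \<subseteq> S"
    and G: "Ck_on k S G"
  shows "Ck_on k S' (\<lambda>z. G (L z))"
  using G
proof (induction k arbitrary: G)
  case 0
  have "continuous_on S' L" using L linear_continuous_on linear_conv_bounded_linear by blast
  then show ?case using 0 LS by (auto intro: continuous_on_compose2)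
next
  case (Suc k)
  have dL: "L differentiable (at z)" for z
    using L linear_conv_bounded_linear bounded_linear_imp_differentiable by blast
  have fdL: "frechet_derivative L (at z) = L" for z
    using frechet_derivative_at[OF bounded_linear_imp_has_derivative] L
    by (metis linear_conv_bounded_linear)
  have d: "\<forall>x\<in>S'. (\<lambda>z. G (L z)) differentiable (at x)"
  proof
    fix x assume x: "x \<in> S'"
    have "G differentiable (at (L x))" using Suc.prems x LS by auto
    from differentiable_chain_at[OF dL this] show "(\<lambda>z. G (L z)) differentiable (at x)"
      by (simp add: o_def)
  qed
  have p: "Ck_on k S' (\<lambda>x. frechet_derivative (\<lambda>z. G (L z)) (at x) i)" if i: "i \<in> Basis" for i
  proof (rule ck_cong[OF S'])
    show "Ck_on k S' (\<lambda>x. \<Sum>j\<in>Basis. (L i \<bullet> j) * frechet_derivative G (at (L x)) j)"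
      using Suc.IH Suc.prems by (intro ck_sum S' ck_cmult) auto
    fix x assume x: "x \<in> S'"
    have dG: "G differentiable (at (L x))" using Suc.prems x LS by auto
    have lin: "linear (frechet_derivative G (at (L x)))" by (rule linear_frechet_derivative[OF dG])
    have "frechet_derivative (\<lambda>z. G (L z)) (at x) i = frechet_derivative G (at (L x)) (L i)"
      using frechet_derivative_compose[OF dL dG] fdL by (simp add: o_def)
    also have "\<dots> = frechet_derivative G (at (L x)) (\<Sum>j\<in>Basis. (L i \<bullet> j) *\<^sub>R j)"
      by (simp add: euclidean_representation)
    also have "\<dots> = (\<Sum>j\<in>Basis. (L i \<bullet> j) * frechet_derivative G (at (L x)) j)"
      using lin by (simp add: linear_sum linear_scale)
    finally show "(\<Sum>j\<in>Basis. (L i \<bullet> j) * frechet_derivative G (at (L x)) j) =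
       frechet_derivative (\<lambda>z. G (L z)) (at x) i" by simp
  qed
  show ?case using d p by simp
qed

lemma ck_linear:
  fixes L :: "'m::euclidean_space \<Rightarrow> real"
  assumes L: "linear L"
  shows "Ck_on k S L"
proof -
  have bl: "bounded_linear L" using L linear_conv_bounded_linear by blast
  show ?thesis
  proof (cases k)
    case 0 then show ?thesis using linear_continuous_on[OF bl] by simp
  next
    case (Suc n)
    have dL: "L differentiable (at z)" for z
      using bl bounded_linear_imp_differentiable by blast
    have fdL: "frechet_derivative L (at z) = L" for z
      using frechet_derivative_at[OF bounded_linear_imp_has_derivative[OF bl]] by simp
    have "Ck_on n S (\<lambda>x. frechet_derivative L (at x) i)" for i
      unfolding fdL by (rule ck_const)
    then show ?thesis using Suc dL by simp
  qed
qed

lemma powr_convex0: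
  fixes p t u v :: real
  assumes p: "1 \<le> p" and t: "0 \<le> t" "t \<le> 1" and u: "0 \<le> u" and v: "0 \<le> v"
  shows "(t * u + (1 - t) * v) powr p \<le> t * u powr p + (1 - t) * v powr p"
proof (cases "u = 0 \<or> v = 0")
  case True
  have aux: "(s * w) powr p \<le> s * w powr p" if "0 \<le> s" "s \<le> 1" "0 \<le> w" for s w :: real
  proof -
    have "(s * w) powr p = s powr p * w powr p" using that by (simp add: powr_mult)
    also have "s powr p \<le> s"
    proof (cases "s = 0")
      case False
      then have "s powr p \<le> s powr 1" using that p by (intro powr_mono') auto
      then show ?thesis using that by simp
    qed simp
    then have "s powr p * w powr p \<le> s * w powr p" by (intro mult_right_mono) auto
    finally show ?thesis .
  qed
  show ?thesis
  proof (cases "u = 0")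
    case True
    then show ?thesis using aux[of "1 - t" v] t v p by simp
  next
    case False
    with \<open>u = 0 \<or> v = 0\<close> have "v = 0" by simp
    then show ?thesis using aux[of t u] t u p by simp
  qed
next
  case False
  then have "u > 0" "v > 0" using u v by auto
  from convex_onD[OF powr_convex[OF p], of t v u] t this
  show ?thesis by (simp add: algebra_simps)
qed

lemma mink_pt:
  fixes p a b x y :: real
  assumes p: "1 \<le> p" and a: "0 < a" and b: "0 < b" and x: "0 \<le> x" and y: "0 \<le> y"
  shows "(x + y) powr p \<le> (a + b) powr (p - 1) * (x powr p / a powr (p - 1) + y powr p / b powr (p - 1))"
proof -
  define t where "t = a / (a + b)"
  have t: "0 \<le> t" "t \<le> 1" "1 - t = b / (a + b)" using a b by (auto simp: t_def field_simps)
  have ab0: "a + b \<noteq> 0" using a b by simp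
  have e1: "t * (x / a) = x / (a + b)" using a unfolding t_def by simp
  have e2: "(1 - t) * (y / b) = y / (a + b)" using b unfolding t(3) by simp
  have "x + y = (a + b) * (t * (x / a) + (1 - t) * (y / b))"
    unfolding e1 e2 using ab0 by (simp add: add_divide_distrib[symmetric])
  then have "(x + y) powr p = (a + b) powr p * (t * (x / a) + (1 - t) * (y / b)) powr p"
    using a b x y t by (simp add: powr_mult)
  also have "\<dots> \<le> (a + b) powr p * (t * (x / a) powr p + (1 - t) * (y / b) powr p)"
    using a b x y t by (intro mult_left_mono powr_convex0 p) auto
  also have "\<dots> = (a + b) powr (p - 1) * (x powr p / a powr (p - 1) + y powr p / b powr (p - 1))"
  proof -
    have ab: "(a + b) powr p = (a + b) * (a + b) powr (p - 1)"
      using a b by (simp add: powr_diff field_simps powr_realpow[symmetric])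
    have aa: "a powr p = a * a powr (p - 1)" using a by (simp add: powr_diff field_simps)
    have bb: "b powr p = b * b powr (p - 1)" using b by (simp add: powr_diff field_simps)
    have A0: "a powr (p - 1) > 0" "b powr (p - 1) > 0" using a b by auto
    have D: "0 < a * a powr (p - 1) + b * a powr (p - 1)" "0 < a * b powr (p - 1) + b * b powr (p - 1)"
      using a b A0 by (auto intro: add_pos_pos)
    have frac: "(c / s) * (X / (c * C)) = X / (s * C)" if "c > 0" "s > 0" "C > 0" for c s C X :: real
      using that by (simp add: field_simps)
    have f1: "t * (x / a) powr p = x powr p / ((a + b) * a powr (p - 1))"
      using frac[of a "a + b" "a powr (p - 1)" "x powr p"] a b x A0 by (simp add: t_def powr_divide aa)
    have f2: "(1 - t) * (y / b) powr p = y powr p / ((a + b) * b powr (p - 1))"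
      using frac[of b "a + b" "b powr (p - 1)" "y powr p"] a b y A0 unfolding t(3) by (simp add: powr_divide bb)
    have g: "s * Pw * (X / (s * A) + Y / (s * B)) = Pw * (X / A + Y / B)"
      if "s > 0" "A > 0" "B > 0" for s Pw X Y A B :: real
      using that by (simp add: field_simps)
    show ?thesis unfolding f1 f2 ab
      by (rule g) (use a b A0 in auto)
  qed
  finally show ?thesis .
qed

locale lpspace = finite_measure M for M :: "'a measure" +
  fixes p :: real
  assumes p1: "1 \<le> p" and mpos: "measure M (space M) > 0"
begin

definition good :: "('a \<Rightarrow> real) \<Rightarrow> bool" where
  "good F \<longleftrightarrow> F \<in> borel_measurable M \<and> (\<exists>B. \<forall>x\<in>space M. \<bar>F x\<bar> \<le> B)"

definition avg :: "('a \<Rightarrow> real) \<Rightarrow> real" where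
  "avg F = (1 / measure M (space M)) * integral\<^sup>L M F"

lemma Lp_def': "Lp_norm M p F = (avg (\<lambda>x. \<bar>F x\<bar> powr p)) powr (1 / p)"
  by (simp add: Lp_norm_def avg_def)

lemma avg_nonneg: "(\<And>x. x \<in> space M \<Longrightarrow> 0 \<le> F x) \<Longrightarrow> 0 \<le> avg F"
  using mpos by (simp add: avg_def integral_nonneg)

lemma avg_mono: "integrable M F \<Longrightarrow> integrable M G \<Longrightarrow> (\<And>x. x \<in> space M \<Longrightarrow> F x \<le> G x) \<Longrightarrow> avg F \<le> avg G"
  using mpos by (simp add: avg_def integral_mono divide_right_mono)

lemma avg_cmult: "avg (\<lambda>x. c * F x) = c * avg F"
  by (simp add: avg_def)

lemma avg_add: "integrable M F \<Longrightarrow> integrable M G \<Longrightarrow> avg (\<lambda>x. F x + G x) = avg F + avg G"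
  by (simp add: avg_def algebra_simps)

lemma avg_const: "avg (\<lambda>x. c) = c"
  using mpos by (simp add: avg_def)

lemma avg_cong: "(\<And>x. x \<in> space M \<Longrightarrow> F x = G x) \<Longrightarrow> avg F = avg G"
  by (simp add: avg_def cong: Bochner_Integration.integral_cong)

lemma Lp_nonneg: "0 \<le> Lp_norm M p F"
  by (simp add: Lp_norm_def)

lemma Lp_cong: "(\<And>x. x \<in> space M \<Longrightarrow> F x = G x) \<Longrightarrow> Lp_norm M p F = Lp_norm M p G"
  unfolding Lp_def' by (metis (no_types, lifting) avg_cong)

lemma good_intg: "good F \<Longrightarrow> integrable M (\<lambda>x. \<bar>F x\<bar> powr p)"
  unfolding good_def
proof (elim conjE exE)
  fix B assume m: "F \<in> borel_measurable M" and B: "\<forall>x\<in>space M. \<bar>F x\<bar> \<le> B"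
  show "integrable M (\<lambda>x. \<bar>F x\<bar> powr p)"
  proof (rule integrable_const_bound[where B="B powr p"])
    show "AE x in M. norm (\<bar>F x\<bar> powr p) \<le> B powr p"
      using B p1 by (intro AE_I2) (auto intro!: powr_mono2)
    show "(\<lambda>x. \<bar>F x\<bar> powr p) \<in> borel_measurable M" using m by measurable
  qed
qed

lemma good_add: "good F \<Longrightarrow> good G \<Longrightarrow> good (\<lambda>x. F x + G x)"
  unfolding good_def
proof (elim conjE exE, intro conjI)
  fix B C assume "F \<in> borel_measurable M" "G \<in> borel_measurable M"
    "\<forall>x\<in>space M. \<bar>F x\<bar> \<le> B" "\<forall>x\<in>space M. \<bar>G x\<bar> \<le> C"
  then show "(\<lambda>x. F x + G x) \<in> borel_measurable M" "\<exists>B. \<forall>x\<in>space M. \<bar>F x + G x\<bar> \<le> B"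
    by (auto intro!: exI[of _ "B + C"] abs_triangle_ineq[THEN order_trans] add_mono)
qed

lemma good_mult: "good F \<Longrightarrow> good G \<Longrightarrow> good (\<lambda>x. F x * G x)"
  unfolding good_def
proof (elim conjE exE, intro conjI)
  fix B C assume "F \<in> borel_measurable M" "G \<in> borel_measurable M"
    and B: "\<forall>x\<in>space M. \<bar>F x\<bar> \<le> B" and C: "\<forall>x\<in>space M. \<bar>G x\<bar> \<le> C"
  then show "(\<lambda>x. F x * G x) \<in> borel_measurable M" by auto
  show "\<exists>B. \<forall>x\<in>space M. \<bar>F x * G x\<bar> \<le> B"
    using B C by (auto intro!: exI[of _ "B * C"] simp: abs_mult mult_mono)
qed

lemma good_const: "good (\<lambda>x. c)"
  unfolding good_def by auto

lemma good_cmult: "good F \<Longrightarrow> good (\<lambda>x. c * F x)"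
  using good_mult[OF good_const] by blast

lemma good_diff: "good F \<Longrightarrow> good G \<Longrightarrow> good (\<lambda>x. F x - G x)"
  using good_add[of F "\<lambda>x. (-1) * G x"] good_cmult[of G "-1"] by simp

lemma Lp_pow: "Lp_norm M p F powr p = avg (\<lambda>x. \<bar>F x\<bar> powr p)"
proof -
  have "0 \<le> avg (\<lambda>x. \<bar>F x\<bar> powr p)" by (rule avg_nonneg) simp
  then show ?thesis using p1 by (simp add: Lp_def' powr_powr)
qed

lemma Lp_le_from_pow:
  assumes "0 \<le> c" "avg (\<lambda>x. \<bar>F x\<bar> powr p) \<le> c powr p"
  shows "Lp_norm M p F \<le> c"
proof -
  have "Lp_norm M p F \<le> (c powr p) powr (1 / p)"
    unfolding Lp_def' using assms p1 by (intro powr_mono2) (auto intro: avg_nonneg)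
  then show ?thesis using assms p1 by (simp add: powr_powr)
qed

lemma Lp_cmult: "Lp_norm M p (\<lambda>x. c * F x) = \<bar>c\<bar> * Lp_norm M p F"
proof -
  have "avg (\<lambda>x. \<bar>c * F x\<bar> powr p) = \<bar>c\<bar> powr p * avg (\<lambda>x. \<bar>F x\<bar> powr p)"
    by (simp add: abs_mult powr_mult avg_cmult[symmetric])
  moreover have "0 \<le> avg (\<lambda>x. \<bar>F x\<bar> powr p)" by (rule avg_nonneg) simp
  ultimately show ?thesis using p1
    by (simp add: Lp_def' powr_mult powr_powr)
qed

lemma Lp_const: "Lp_norm M p (\<lambda>x. c) = \<bar>c\<bar>"
  using p1 by (simp add: Lp_def' avg_const powr_powr)

lemma Lp_mono:
  assumes F: "F \<in> borel_measurable M" and G: "good G"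
    and le: "\<And>x. x \<in> space M \<Longrightarrow> \<bar>F x\<bar> \<le> \<bar>G x\<bar>"
  shows "Lp_norm M p F \<le> Lp_norm M p G"
proof -
  have iG: "integrable M (\<lambda>x. \<bar>G x\<bar> powr p)" by (rule good_intg[OF G])
  have iF: "integrable M (\<lambda>x. \<bar>F x\<bar> powr p)"
  proof (rule Bochner_Integration.integrable_bound[OF iG])
    show "(\<lambda>x. \<bar>F x\<bar> powr p) \<in> borel_measurable M" using F by measurable
    show "AE x in M. norm (\<bar>F x\<bar> powr p) \<le> norm (\<bar>G x\<bar> powr p)"
      using le p1 by (intro AE_I2) (auto intro!: powr_mono2)
  qed
  have "avg (\<lambda>x. \<bar>F x\<bar> powr p) \<le> avg (\<lambda>x. \<bar>G x\<bar> powr p)"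
    using le p1 by (intro avg_mono iF iG) (auto intro!: powr_mono2)
  then show ?thesis unfolding Lp_def' using p1
    by (intro powr_mono2) (auto intro: avg_nonneg)
qed

lemma Lp_triangle:
  assumes F: "good F" and G: "good G"
  shows "Lp_norm M p (\<lambda>x. F x + G x) \<le> Lp_norm M p F + Lp_norm M p G"
proof (rule field_le_epsilon)
  fix e :: real assume e: "0 < e"
  define a where "a = Lp_norm M p F + e / 2"
  define b where "b = Lp_norm M p G + e / 2"
  have a: "0 < a" and b: "0 < b" using e Lp_nonneg by (auto simp: a_def b_def add_nonneg_pos)
  have A: "avg (\<lambda>x. \<bar>F x\<bar> powr p) \<le> a powr p"
    unfolding Lp_pow[symmetric] a_def using e p1 Lp_nonneg by (intro powr_mono2) auto
  have B: "avg (\<lambda>x. \<bar>G x\<bar> powr p) \<le> b powr p"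
    unfolding Lp_pow[symmetric] b_def using e p1 Lp_nonneg by (intro powr_mono2) auto
  have iF: "integrable M (\<lambda>x. \<bar>F x\<bar> powr p)" by (rule good_intg[OF F])
  have iG: "integrable M (\<lambda>x. \<bar>G x\<bar> powr p)" by (rule good_intg[OF G])
  have iFG: "integrable M (\<lambda>x. \<bar>F x + G x\<bar> powr p)" by (rule good_intg[OF good_add[OF F G]])
  have "avg (\<lambda>x. \<bar>F x + G x\<bar> powr p) \<le>
        avg (\<lambda>x. (a + b) powr (p - 1) * (\<bar>F x\<bar> powr p / a powr (p - 1) + \<bar>G x\<bar> powr p / b powr (p - 1)))"
  proof (rule avg_mono[OF iFG])
    show "integrable M (\<lambda>x. (a + b) powr (p - 1) * (\<bar>F x\<bar> powr p / a powr (p - 1) + \<bar>G x\<bar> powr p / b powr (p - 1)))"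
      using iF iG by auto
    fix x
    have "\<bar>F x + G x\<bar> powr p \<le> (\<bar>F x\<bar> + \<bar>G x\<bar>) powr p"
      using p1 by (intro powr_mono2) auto
    also have "\<dots> \<le> (a + b) powr (p - 1) * (\<bar>F x\<bar> powr p / a powr (p - 1) + \<bar>G x\<bar> powr p / b powr (p - 1))"
      by (rule mink_pt[OF p1 a b]) auto
    finally show "\<bar>F x + G x\<bar> powr p \<le> (a + b) powr (p - 1) * (\<bar>F x\<bar> powr p / a powr (p - 1) + \<bar>G x\<bar> powr p / b powr (p - 1))" .
  qed
  also have "\<dots> = (a + b) powr (p - 1) * (avg (\<lambda>x. \<bar>F x\<bar> powr p) / a powr (p - 1) + avg (\<lambda>x. \<bar>G x\<bar> powr p) / b powr (p - 1))"
    using iF iG by (simp add: avg_def algebra_simps)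
  also have "\<dots> \<le> (a + b) powr (p - 1) * (a powr p / a powr (p - 1) + b powr p / b powr (p - 1))"
    using A B a b by (intro mult_left_mono add_mono divide_right_mono) auto
  also have "\<dots> = (a + b) powr p"
  proof -
    have "a powr p / a powr (p - 1) = a" using a by (simp add: powr_diff)
    moreover have "b powr p / b powr (p - 1) = b" using b by (simp add: powr_diff)
    moreover have "(a + b) powr (p - 1) * (a + b) = (a + b) powr p"
      using a b by (simp add: powr_diff)
    ultimately show ?thesis by simp
  qed
  finally have "Lp_norm M p (\<lambda>x. F x + G x) \<le> a + b"
    using a b by (intro Lp_le_from_pow) auto
  then show "Lp_norm M p (\<lambda>x. F x + G x) \<le> Lp_norm M p F + Lp_norm M p G + e"
    by (simp add: a_def b_def)
qed

end

lemma dini_mono: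
  fixes \<phi> :: "real \<Rightarrow> real"
  assumes ab: "a \<le> b" and cont: "continuous_on {a..b} \<phi>"
    and loc: "\<And>t. t \<in> {a..<b} \<Longrightarrow> \<exists>d>0. \<forall>h. 0 < h \<and> h < d \<and> t + h \<le> b \<longrightarrow> \<phi> (t + h) \<le> \<phi> t"
  shows "\<phi> b \<le> \<phi> a"
proof (rule ccontr)
  assume nb: "\<not> \<phi> b \<le> \<phi> a"
  define K where "K = {t \<in> {a..b}. \<phi> t \<le> \<phi> a}"
  have "K = {a..b} \<inter> \<phi> -` {..\<phi> a}" by (auto simp: K_def)
  then have Kc: "closed K"
    using continuous_closed_preimage[OF cont closed_atLeastAtMost closed_atMost] by simp
  have aK: "a \<in> K" using ab by (simp add: K_def)
  have Kb: "bdd_above K" unfolding K_def by (auto intro: bdd_aboveI[of _ b])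
  define s where "s = Sup K"
  have sK: "s \<in> K" unfolding s_def using Kc aK Kb closed_contains_Sup by blast
  have sle: "\<And>t. t \<in> K \<Longrightarrow> t \<le> s" unfolding s_def using Kb by (simp add: cSup_upper)
  have "s \<noteq> b" using sK nb by (auto simp: K_def)
  then have s: "s \<in> {a..<b}" using sK by (auto simp: K_def)
  obtain d where d: "d > 0" "\<And>h. 0 < h \<and> h < d \<and> s + h \<le> b \<longrightarrow> \<phi> (s + h) \<le> \<phi> s"
    using loc[OF s] by blast
  define h where "h = min (d / 2) (b - s)"
  have h: "0 < h" "h < d" "s + h \<le> b" using d s by (auto simp: h_def)
  have "\<phi> (s + h) \<le> \<phi> a" using d(2)[of h] h sK by (auto simp: K_def)
  then have "s + h \<in> K" using h s by (auto simp: K_def)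
  then show False using sle h by fastforce
qed

locale lpX = lpspace M p for M :: "'a::topological_space measure" and p +
  assumes sets_eq: "sets M = sets (restrict_space borel (space M))"
    and cpt: "compact (space M)"
begin

lemma cont_meas: "continuous_on (space M) F \<Longrightarrow> (F :: 'a \<Rightarrow> real) \<in> borel_measurable M"
proof -
  assume "continuous_on (space M) F"
  then have "F \<in> borel_measurable (restrict_space borel (space M))"
    by (rule borel_measurable_continuous_on_restrict)
  moreover have "borel_measurable M = (borel_measurable (restrict_space borel (space M)) :: ('a \<Rightarrow> real) set)"
    by (rule measurable_cong_sets[OF sets_eq]) simp
  ultimately show ?thesis by simp
qed

lemma cont_good: "continuous_on (space M) F \<Longrightarrow> good F"
  unfolding good_def
proof (intro conjI cont_meas)
  assume c: "continuous_on (space M) F"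
  have "compact (F ` space M)" by (rule compact_continuous_image[OF c cpt])
  then obtain B where "\<forall>y\<in>F ` space M. norm y \<le> B"
    using compact_imp_bounded bounded_iff by metis
  then show "\<exists>B. \<forall>x\<in>space M. \<bar>F x\<bar> \<le> B" by auto
qed

lemma avg_cont:
  fixes F :: "real \<Rightarrow> 'a \<Rightarrow> real"
  assumes meas: "\<And>t. t \<in> T \<Longrightarrow> F t \<in> borel_measurable M"
    and bnd: "\<And>t x. t \<in> T \<Longrightarrow> x \<in> space M \<Longrightarrow> \<bar>F t x\<bar> \<le> B"
    and cont: "\<And>x. x \<in> space M \<Longrightarrow> continuous (at t0 within T) (\<lambda>t. F t x)"
    and t0: "t0 \<in> T"
  shows "continuous (at t0 within T) (\<lambda>t. avg (\<lambda>x. \<bar>F t x\<bar> powr p))"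
proof (rule continuous_within_sequentiallyI)
  fix u :: "nat \<Rightarrow> real" assume u: "u \<longlonglongrightarrow> t0" and uT: "\<forall>n. u n \<in> T"
  have "(\<lambda>n. integral\<^sup>L M (\<lambda>x. \<bar>F (u n) x\<bar> powr p)) \<longlonglongrightarrow> integral\<^sup>L M (\<lambda>x. \<bar>F t0 x\<bar> powr p)"
  proof (rule integral_dominated_convergence[where w="\<lambda>x. B powr p"])
    show "(\<lambda>x. \<bar>F t0 x\<bar> powr p) \<in> borel_measurable M" using meas[OF t0] by measurable
    show "(\<lambda>x. \<bar>F (u n) x\<bar> powr p) \<in> borel_measurable M" for n using meas[of "u n", OF uT[rule_format]] by measurable
    show "integrable M (\<lambda>x. B powr p)" by simp
    show "AE x in M. (\<lambda>n. \<bar>F (u n) x\<bar> powr p) \<longlonglongrightarrow> \<bar>F t0 x\<bar> powr p"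
    proof (rule AE_I2)
      fix x assume x: "x \<in> space M"
      have "(\<lambda>n. F (u n) x) \<longlonglongrightarrow> F t0 x"
        using cont[OF x] u uT unfolding continuous_within_sequentially by (auto simp: o_def)
      then show "(\<lambda>n. \<bar>F (u n) x\<bar> powr p) \<longlonglongrightarrow> \<bar>F t0 x\<bar> powr p"
        using p1 by (intro tendsto_powr2 tendsto_rabs) auto
    qed
    show "AE x in M. norm (\<bar>F (u n) x\<bar> powr p) \<le> B powr p" for n
      using bnd uT p1 by (intro AE_I2) (auto intro!: powr_mono2)
  qed
  then show "(\<lambda>n. avg (\<lambda>x. \<bar>F (u n) x\<bar> powr p)) \<longlonglongrightarrow> avg (\<lambda>x. \<bar>F t0 x\<bar> powr p)"
    unfolding avg_def by (intro tendsto_mult_left)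
qed

lemma Lp_cont:
  fixes F :: "real \<Rightarrow> 'a \<Rightarrow> real"
  assumes meas: "\<And>t. t \<in> T \<Longrightarrow> F t \<in> borel_measurable M"
    and bnd: "\<And>t x. t \<in> T \<Longrightarrow> x \<in> space M \<Longrightarrow> \<bar>F t x\<bar> \<le> B"
    and cont: "\<And>x. x \<in> space M \<Longrightarrow> continuous (at t0 within T) (\<lambda>t. F t x)"
    and t0: "t0 \<in> T"
  shows "continuous (at t0 within T) (\<lambda>t. Lp_norm M p (F t))"
proof -
  have c: "continuous (at t0 within T) (\<lambda>t. avg (\<lambda>x. \<bar>F t x\<bar> powr p))"
    by (rule avg_cont[OF assms])
  show ?thesis unfolding Lp_def' continuous_within
    using c p1 unfolding continuous_within
    by (intro tendsto_powr2) (auto intro!: always_eventually avg_nonneg)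
qed

lemma slice_x:
  fixes a b :: real and g :: "real \<Rightarrow> 'a \<Rightarrow> real"
  assumes "continuous_on ({a..b} \<times> space M) (\<lambda>z. g (fst z) (snd z))" "t \<in> {a..b}"
  shows "continuous_on (space M) (g t)"
proof -
  have "continuous_on (space M) (\<lambda>x. (\<lambda>z. g (fst z) (snd z)) (t, x))"
    by (rule continuous_on_compose2[OF assms(1)]) (use assms(2) in \<open>auto intro!: continuous_intros\<close>)
  then show ?thesis by simp
qed

lemma slice_t:
  fixes a b :: real and g :: "real \<Rightarrow> 'a \<Rightarrow> real"
  assumes "continuous_on ({a..b} \<times> space M) (\<lambda>z. g (fst z) (snd z))" "x \<in> space M"
  shows "continuous_on {a..b} (\<lambda>t. g t x)"
proof -
  have "continuous_on {a..b} (\<lambda>t. (\<lambda>z. g (fst z) (snd z)) (t, x))"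
    by (rule continuous_on_compose2[OF assms(1)]) (use assms(2) in \<open>auto intro!: continuous_intros\<close>)
  then show ?thesis by simp
qed

lemma bound2:
  fixes a b :: real and g :: "real \<Rightarrow> 'a \<Rightarrow> real"
  assumes "continuous_on ({a..b} \<times> space M) (\<lambda>z. g (fst z) (snd z))"
  shows "\<exists>B. \<forall>t\<in>{a..b}. \<forall>x\<in>space M. \<bar>g t x\<bar> \<le> B"
proof -
  have "compact ((\<lambda>z. g (fst z) (snd z)) ` ({a..b} \<times> space M))"
    by (rule compact_continuous_image[OF assms compact_Times[OF compact_Icc cpt]])
  then obtain B where "\<forall>y\<in>(\<lambda>z. g (fst z) (snd z)) ` ({a..b} \<times> space M). norm y \<le> B"
    using compact_imp_bounded bounded_iff by metis
  then show ?thesis by force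
qed

lemma ub_piece:
  fixes \<gamma> w :: "real \<Rightarrow> 'a \<Rightarrow> real"
  assumes ab: "a < b"
    and gc: "continuous_on ({a..b} \<times> space M) (\<lambda>z. \<gamma> (fst z) (snd z))"
    and wc: "continuous_on ({a..b} \<times> space M) (\<lambda>z. w (fst z) (snd z))"
    and der: "\<And>x t. x \<in> space M \<Longrightarrow> t \<in> {a..b} \<Longrightarrow>
               ((\<lambda>s. \<gamma> s x) has_vector_derivative w t x) (at t within {a..b})"
  shows "continuous_on {a..b} (\<lambda>t. Lp_norm M p (w t))"
    and "Lp_norm M p (\<lambda>x. \<gamma> b x - \<gamma> a x) \<le> integral {a..b} (\<lambda>t. Lp_norm M p (w t))"
proof -
  obtain Bw where Bw: "\<And>t x. t \<in> {a..b} \<Longrightarrow> x \<in> space M \<Longrightarrow> \<bar>w t x\<bar> \<le> Bw"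
    using bound2[OF wc] by blast
  obtain Bg where Bg: "\<And>t x. t \<in> {a..b} \<Longrightarrow> x \<in> space M \<Longrightarrow> \<bar>\<gamma> t x\<bar> \<le> Bg"
    using bound2[OF gc] by blast
  have wx: "continuous_on (space M) (w t)" if "t \<in> {a..b}" for t by (rule slice_x[OF wc that])
  have gx: "continuous_on (space M) (\<gamma> t)" if "t \<in> {a..b}" for t by (rule slice_x[OF gc that])
  have wt: "continuous_on {a..b} (\<lambda>t. w t x)" if "x \<in> space M" for x by (rule slice_t[OF wc that])
  have gt: "continuous_on {a..b} (\<lambda>t. \<gamma> t x)" if "x \<in> space M" for x by (rule slice_t[OF gc that])
  define S where "S t = Lp_norm M p (w t)" for t
  show Sc: "continuous_on {a..b} (\<lambda>t. Lp_norm M p (w t))"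
    unfolding continuous_on_eq_continuous_within
  proof
    fix t0 assume t0: "t0 \<in> {a..b}"
    show "continuous (at t0 within {a..b}) (\<lambda>t. Lp_norm M p (w t))"
      by (rule Lp_cont[where B=Bw]) (use wx cont_meas Bw t0 wt in \<open>auto simp: continuous_on_eq_continuous_within\<close>)
  qed
  then have Sc': "continuous_on {a..b} S" by (simp add: S_def)
  define I where "I t = integral {a..t} S" for t
  have Ider: "(I has_vector_derivative S t) (at t within {a..b})" if "t \<in> {a..b}" for t
    unfolding I_def by (rule integral_has_vector_derivative[OF Sc' that])
  have Icont: "continuous_on {a..b} I"
    using Ider continuous_on_eq_continuous_within has_vector_derivative_continuous by blast
  have key: "Lp_norm M p (\<lambda>x. \<gamma> b x - \<gamma> a x) \<le> I b + e * (b - a)" if e: "e > 0" for e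
  proof -
    define \<phi> where "\<phi> t = Lp_norm M p (\<lambda>x. \<gamma> t x - \<gamma> a x) - I t - e * (t - a)" for t
    have a_in: "a \<in> {a..b}" using ab by simp
    have Lc: "continuous_on {a..b} (\<lambda>t. Lp_norm M p (\<lambda>x. \<gamma> t x - \<gamma> a x))"
      unfolding continuous_on_eq_continuous_within
    proof
      fix t0 assume t0: "t0 \<in> {a..b}"
      show "continuous (at t0 within {a..b}) (\<lambda>t. Lp_norm M p (\<lambda>x. \<gamma> t x - \<gamma> a x))"
      proof (rule Lp_cont[where B="2 * Bg"])
        show "(\<lambda>x. \<gamma> t x - \<gamma> a x) \<in> borel_measurable M" if "t \<in> {a..b}" for t
          using gx[OF that] gx[OF a_in] by (intro cont_meas continuous_on_diff)
        show "\<bar>\<gamma> t x - \<gamma> a x\<bar> \<le> 2 * Bg" if "t \<in> {a..b}" "x \<in> space M" for t x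
          using Bg[OF that] Bg[OF a_in that(2)] by linarith
        show "continuous (at t0 within {a..b}) (\<lambda>t. \<gamma> t x - \<gamma> a x)" if "x \<in> space M" for x
          using gt[OF that] t0 by (intro continuous_intros) (auto simp: continuous_on_eq_continuous_within)
      qed fact
    qed
    have \<phi>c: "continuous_on {a..b} \<phi>"
      unfolding \<phi>_def by (intro continuous_intros Lc Icont)
    have loc: "\<exists>d>0. \<forall>h. 0 < h \<and> h < d \<and> t0 + h \<le> b \<longrightarrow> \<phi> (t0 + h) \<le> \<phi> t0" if t0: "t0 \<in> {a..<b}" for t0
    proof -
      have t0': "t0 \<in> {a..b}" using t0 by auto
      have e2: "e / 2 > 0" using e by simp
      from Ider[OF t0'] e2 obtain d1 where d1: "d1 > 0"
        "\<And>y. y \<in> {a..b} \<Longrightarrow> norm (y - t0) < d1 \<Longrightarrow>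
            norm (I y - I t0 - (y - t0) *\<^sub>R S t0) \<le> e / 2 * norm (y - t0)"
        unfolding has_vector_derivative_def has_derivative_within_alt by blast
      define G where "G h x = (if h = 0 then 0 else (\<gamma> (t0 + h) x - \<gamma> t0 x) / h - w t0 x)" for h x
      define T' where "T' = {0..b - t0}"
      have hT: "t0 + h \<in> {a..b}" if "h \<in> T'" for h using that t0 by (auto simp: T'_def)
      have Gm: "G h \<in> borel_measurable M" if "h \<in> T'" for h
      proof (cases "h = 0")
        case True then show ?thesis by (simp add: G_def[abs_def])
      next
        case False
        then have "G h = (\<lambda>x. (\<gamma> (t0 + h) x - \<gamma> t0 x) / h - w t0 x)" by (auto simp: G_def)
        moreover have "continuous_on (space M) (\<lambda>x. (\<gamma> (t0 + h) x - \<gamma> t0 x) / h - w t0 x)"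
          using gx[OF hT[OF that]] gx[OF t0'] wx[OF t0'] False by (intro continuous_intros) auto
        ultimately show ?thesis using cont_meas by simp
      qed
      have Gb: "\<bar>G h x\<bar> \<le> 2 * Bw" if h: "h \<in> T'" and x: "x \<in> space M" for h x
      proof (cases "h = 0")
        case True then show ?thesis using Bw[OF t0' x] by (simp add: G_def)
      next
        case False
        then have hp: "h > 0" using h by (auto simp: T'_def)
        have "norm (\<gamma> (t0 + h) x - \<gamma> t0 x - ((t0 + h) - t0) *\<^sub>R w t0 x) \<le> norm ((t0 + h) - t0) * (2 * Bw)"
        proof (rule vector_differentiable_bound_linearization[of "{a..b}" "\<lambda>s. \<gamma> s x" "\<lambda>s. w s x" t0 "t0 + h" t0 "2 * Bw"])
          show "((\<lambda>s. \<gamma> s x) has_vector_derivative w s x) (at s within {a..b})" if "s \<in> {a..b}" for s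
            by (rule der[OF x that])
          show "closed_segment t0 (t0 + h) \<subseteq> {a..b}"
            using hT[OF h] t0' hp by (auto simp: closed_segment_eq_real_ivl)
          show "norm (w s x - w t0 x) \<le> 2 * Bw" if "s \<in> {a..b}" for s
            using Bw[OF that x] Bw[OF t0' x] by simp
          show "t0 \<in> {a..b}" by (rule t0')
        qed
        then have "\<bar>\<gamma> (t0 + h) x - \<gamma> t0 x - h * w t0 x\<bar> \<le> h * (2 * Bw)" using hp by simp
        then have "\<bar>(\<gamma> (t0 + h) x - \<gamma> t0 x - h * w t0 x) / h\<bar> \<le> 2 * Bw"
          using hp by (simp add: abs_divide divide_le_eq mult.commute)
        moreover have "(\<gamma> (t0 + h) x - \<gamma> t0 x - h * w t0 x) / h = G h x"
          using hp by (simp add: G_def field_simps)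
        ultimately show ?thesis by simp
      qed
      have Gc: "continuous (at 0 within T') (\<lambda>h. G h x)" if x: "x \<in> space M" for x
        unfolding continuous_within_eps_delta
      proof (intro allI impI)
        fix \<epsilon> :: real assume \<epsilon>: "\<epsilon> > 0"
        from der[OF x t0'] \<epsilon> obtain d where d: "d > 0"
          "\<And>y. y \<in> {a..b} \<Longrightarrow> norm (y - t0) < d \<Longrightarrow>
            norm (\<gamma> y x - \<gamma> t0 x - (y - t0) *\<^sub>R w t0 x) \<le> \<epsilon> / 2 * norm (y - t0)"
          unfolding has_vector_derivative_def has_derivative_within_alt
          by (metis half_gt_zero)
        show "\<exists>d>0. \<forall>h\<in>T'. dist h 0 < d \<longrightarrow> dist (G h x) (G 0 x) < \<epsilon>"
        proof (intro exI[of _ d] conjI ballI impI d(1))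
          fix h assume h: "h \<in> T'" and hd: "dist h 0 < d"
          show "dist (G h x) (G 0 x) < \<epsilon>"
          proof (cases "h = 0")
            case True then show ?thesis using \<epsilon> by (simp add: G_def)
          next
            case False
            then have hp: "h > 0" using h by (auto simp: T'_def)
            have "\<bar>\<gamma> (t0 + h) x - \<gamma> t0 x - h * w t0 x\<bar> \<le> \<epsilon> / 2 * h"
              using d(2)[OF hT[OF h]] hd hp by simp
            then have "\<bar>(\<gamma> (t0 + h) x - \<gamma> t0 x - h * w t0 x) / h\<bar> \<le> \<epsilon> / 2"
              using hp by (simp add: abs_divide divide_le_eq mult.commute)
            moreover have "(\<gamma> (t0 + h) x - \<gamma> t0 x - h * w t0 x) / h = G h x"
              using hp by (simp add: G_def field_simps)
            ultimately show ?thesis using \<epsilon> by (simp add: G_def dist_real_def)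
          qed
        qed
      qed
      have z0: "0 \<in> T'" using t0 by (auto simp: T'_def)
      have LGc: "continuous (at 0 within T') (\<lambda>h. Lp_norm M p (G h))"
        by (rule Lp_cont[where B="2 * Bw"]) (use Gm Gb Gc z0 in auto)
      have LG0: "Lp_norm M p (G 0) = 0" using Lp_const[of 0] by (simp add: G_def[abs_def])
      from LGc e2 obtain d2 where d2: "d2 > 0"
        "\<And>h. h \<in> T' \<Longrightarrow> dist h 0 < d2 \<Longrightarrow> dist (Lp_norm M p (G h)) (Lp_norm M p (G 0)) < e / 2"
        unfolding continuous_within_eps_delta by metis
      show ?thesis
      proof (intro exI[of _ "min d1 d2"] conjI allI impI)
        show "0 < min d1 d2" using d1 d2 by simp
        fix h assume h: "0 < h \<and> h < min d1 d2 \<and> t0 + h \<le> b"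
        then have hT': "h \<in> T'" and hp: "h > 0" by (auto simp: T'_def)
        have t1: "t0 + h \<in> {a..b}" by (rule hT[OF hT'])
        have LGh: "Lp_norm M p (G h) < e / 2" using d2(2)[OF hT'] h LG0 by (simp add: dist_real_def)
        have Ia: "\<bar>I (t0 + h) - I t0 - h * S t0\<bar> \<le> e / 2 * h"
          using d1(2)[OF t1] h hp by simp
        have Ih: "I (t0 + h) - I t0 \<ge> h * S t0 - e / 2 * h"
          using abs_le_D2[OF Ia] by linarith
        have good1: "good (\<lambda>x. \<gamma> t0 x - \<gamma> a x)"
          using gx[OF t0'] gx[OF a_in] by (intro cont_good continuous_intros)
        have good2: "good (\<lambda>x. \<gamma> (t0 + h) x - \<gamma> t0 x)"
          using gx[OF t0'] gx[OF t1] by (intro cont_good continuous_intros)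
        have goodG: "good (G h)"
          unfolding good_def using Gm[OF hT'] Gb[OF hT'] by blast
        have "Lp_norm M p (\<lambda>x. \<gamma> (t0 + h) x - \<gamma> a x)
            = Lp_norm M p (\<lambda>x. (\<gamma> t0 x - \<gamma> a x) + (\<gamma> (t0 + h) x - \<gamma> t0 x))"
          by (rule Lp_cong) simp
        also have "\<dots> \<le> Lp_norm M p (\<lambda>x. \<gamma> t0 x - \<gamma> a x) + Lp_norm M p (\<lambda>x. \<gamma> (t0 + h) x - \<gamma> t0 x)"
          by (rule Lp_triangle[OF good1 good2])
        also have "Lp_norm M p (\<lambda>x. \<gamma> (t0 + h) x - \<gamma> t0 x) = Lp_norm M p (\<lambda>x. h * (w t0 x + G h x))"
          by (rule Lp_cong) (use hp in \<open>simp add: G_def field_simps\<close>)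
        also have "\<dots> = h * Lp_norm M p (\<lambda>x. w t0 x + G h x)"
          using hp by (simp add: Lp_cmult)
        also have "Lp_norm M p (\<lambda>x. w t0 x + G h x) \<le> S t0 + e / 2"
          using Lp_triangle[OF cont_good[OF wx[OF t0']] goodG] LGh by (simp add: S_def)
        finally have "Lp_norm M p (\<lambda>x. \<gamma> (t0 + h) x - \<gamma> a x)
             \<le> Lp_norm M p (\<lambda>x. \<gamma> t0 x - \<gamma> a x) + h * (S t0 + e / 2)"
          using hp by (simp add: mult_left_mono)
        then show "\<phi> (t0 + h) \<le> \<phi> t0"
          using Ih unfolding \<phi>_def by (simp add: algebra_simps)
      qed
    qed
    have "\<phi> b \<le> \<phi> a" by (rule dini_mono[OF less_imp_le[OF ab] \<phi>c loc])
    moreover have "\<phi> a = 0" using Lp_const[of 0] by (simp add: \<phi>_def I_def)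
    ultimately show ?thesis by (simp add: \<phi>_def)
  qed
  show "Lp_norm M p (\<lambda>x. \<gamma> b x - \<gamma> a x) \<le> integral {a..b} (\<lambda>t. Lp_norm M p (w t))"
  proof (rule field_le_epsilon)
    fix e :: real assume e: "e > 0"
    have "Lp_norm M p (\<lambda>x. \<gamma> b x - \<gamma> a x) \<le> I b + e / (b - a) * (b - a)"
      using key[of "e / (b - a)"] e ab by simp
    then show "Lp_norm M p (\<lambda>x. \<gamma> b x - \<gamma> a x) \<le> integral {a..b} (\<lambda>t. Lp_norm M p (w t)) + e"
      using ab by (simp add: I_def S_def[abs_def])
  qed
qed

end

lemma continuous_on_local:
  fixes f :: "'a::t2_space \<Rightarrow> 'b::topological_space"
  assumes "\<And>x. x \<in> S \<Longrightarrow> \<exists>N. openin (top_of_set S) N \<and> x \<in> N \<and> continuous_on N f"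
  shows "continuous_on S f"
proof (rule continuous_on_eq_continuous_within[THEN iffD2], rule ballI)
  fix x assume x: "x \<in> S"
  obtain N where N: "openin (top_of_set S) N" "x \<in> N" "continuous_on N f" using assms[OF x] by blast
  obtain Op where O: "open Op" "N = S \<inter> Op" using N(1) by (auto simp: openin_open)
  have "continuous (at x within N) f" using N(2,3) by (simp add: continuous_on_eq_continuous_within)
  moreover have "at x within N = at x within S"
    using O N(2) by (intro at_within_nhd[of x Op]) auto
  ultimately show "continuous (at x within S) f" by simp
qed

locale mfd =
  fixes X :: "'a::t2_space set" and A :: "('a set \<times> ('a \<Rightarrow> 'n::euclidean_space)) set"
  assumes cm: "compact_smooth_manifold X A"
begin

lemma cptX: "compact X" using cm by (simp add: compact_smooth_manifold_def)

lemma chart: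
  assumes "(U, \<phi>) \<in> A"
  shows "openin (top_of_set X) U" "open (\<phi> ` U)" "inj_on \<phi> U" "continuous_on U \<phi>" "U \<subseteq> X"
proof -
  have sa: "smooth_atlas X A" using cm by (simp add: compact_smooth_manifold_def)
  then have h: "openin (top_of_set X) U \<and> open (\<phi> ` U) \<and> (\<exists>\<psi>. homeomorphism U (\<phi> ` U) \<phi> \<psi>)"
    using assms unfolding smooth_atlas_def by fast
  then show "openin (top_of_set X) U" "open (\<phi> ` U)" by auto
  from h obtain \<psi> where hm: "homeomorphism U (\<phi> ` U) \<phi> \<psi>" by blast
  then show "inj_on \<phi> U" "continuous_on U \<phi>"
    unfolding homeomorphism_def by (auto intro: inj_on_inverseI)
  show "U \<subseteq> X" using h by (meson openin_imp_subset)
qed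

lemma inv_chart: "(U, \<phi>) \<in> A \<Longrightarrow> x \<in> U \<Longrightarrow> inv_into U \<phi> (\<phi> x) = x"
  using chart(3) by (simp add: inv_into_f_f)

lemma inv_in: "y \<in> \<phi> ` U \<Longrightarrow> inv_into U \<phi> y \<in> U"
  by (rule inv_into_into)

lemma cover: "x \<in> X \<Longrightarrow> \<exists>U \<phi>. (U, \<phi>) \<in> A \<and> x \<in> U"
proof -
  assume x: "x \<in> X"
  have "X = (\<Union>(U,\<phi>)\<in>A. U)" using cm by (simp add: compact_smooth_manifold_def smooth_atlas_def)
  with x show ?thesis by auto
qed

lemma Cinf_chart: "f \<in> Cinf X A \<Longrightarrow> (U, \<phi>) \<in> A \<Longrightarrow> Ck_on k (\<phi> ` U) (\<lambda>y. f (inv_into U \<phi> y))"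
  unfolding Cinf_def smooth_on_open_def by fast

lemma Cinf_cont:
  assumes f: "f \<in> Cinf X A"
  shows "continuous_on X f"
proof (rule continuous_on_local)
  fix x assume x: "x \<in> X"
  obtain U \<phi> where U: "(U, \<phi>) \<in> A" "x \<in> U" using cover[OF x] by blast
  have c0: "continuous_on (\<phi> ` U) (\<lambda>y. f (inv_into U \<phi> y))"
    using Cinf_chart[OF f U(1), of 0] by simp
  have "continuous_on U (\<lambda>z. f (inv_into U \<phi> (\<phi> z)))"
    by (rule continuous_on_compose2[OF c0 chart(4)[OF U(1)]]) auto
  then have "continuous_on U f"
    by (rule continuous_on_eq) (simp add: inv_chart[OF U(1)])
  then show "\<exists>N. openin (top_of_set X) N \<and> x \<in> N \<and> continuous_on N f"
    using chart(1)[OF U(1)] U(2) by blast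
qed

end

lemma powr_diff_le:
  fixes s u v :: real
  assumes s: "1 \<le> s" and u: "0 < u" and uv: "u \<le> v"
  shows "v powr s - u powr s \<le> s * v powr (s - 1) * (v - u)"
proof (cases "u = v")
  case True then show ?thesis by simp
next
  case False
  then have uv': "u < v" using uv by simp
  have "\<And>x. u \<le> x \<Longrightarrow> x \<le> v \<Longrightarrow> DERIV (\<lambda>x. x powr s) x :> s * x powr (s - 1)"
    using u by (auto intro!: has_real_derivative_powr)
  from MVT2[OF uv' this] obtain z where z: "u < z" "z < v" "v powr s - u powr s = (v - u) * (s * z powr (s - 1))"
    by blast
  have "z powr (s - 1) \<le> v powr (s - 1)" using z u s by (intro powr_mono2) auto
  then have "(v - u) * (s * z powr (s - 1)) \<le> (v - u) * (s * v powr (s - 1))"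
    using uv s by (intro mult_left_mono) auto
  then show ?thesis using z(3) by (simp add: algebra_simps)
qed

lemma pw_half:
  fixes s t u v :: real
  assumes s: "1 \<le> s" and t: "0 < t" "t \<le> 1" and u: "0 < u" and uv: "u \<le> v"
  shows "(1 / s) * ((1 - t) * u powr s + t * v powr s) powr (1 / s - 1) * (v powr s - u powr s)
         \<le> t powr (1 / s - 1) * (v - u)"
proof -
  have v: "0 < v" using u uv by simp
  define e where "e = 1 / s - 1"
  have e: "e \<le> 0" using s by (simp add: e_def)
  have I: "t * v powr s \<le> (1 - t) * u powr s + t * v powr s" using t by simp
  have tv: "0 < t * v powr s" using t v by simp
  have "((1 - t) * u powr s + t * v powr s) powr e \<le> (t * v powr s) powr e"
    by (rule powr_mono2'[OF e tv I])
  also have "\<dots> = t powr e * v powr (1 - s)"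
    using t v s by (simp add: powr_mult powr_powr e_def algebra_simps)
  finally have Ie: "((1 - t) * u powr s + t * v powr s) powr e \<le> t powr e * v powr (1 - s)" .
  have D: "0 \<le> v powr s - u powr s" using u uv s by (simp add: powr_mono2)
  have "(1 / s) * ((1 - t) * u powr s + t * v powr s) powr e * (v powr s - u powr s)
      \<le> (1 / s) * (t powr e * v powr (1 - s)) * (s * v powr (s - 1) * (v - u))"
    using Ie D powr_diff_le[OF s u uv] s by (intro mult_mono mult_left_mono) auto
  also have "\<dots> = t powr e * (v powr (1 - s) * v powr (s - 1)) * (v - u)"
    using s by (simp add: field_simps)
  also have "v powr (1 - s) * v powr (s - 1) = 1" using v by (simp add: powr_add[symmetric])
  finally show ?thesis by (simp add: e_def)
qed

lemma pw_bound:
  fixes s t u v :: real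
  assumes s: "1 \<le> s" and t: "0 < t" "t < 1" and u: "0 < u" and v: "0 < v"
  shows "\<bar>(1 / s) * ((1 - t) * u powr s + t * v powr s) powr (1 / s - 1) * (v powr s - u powr s)\<bar>
         \<le> (t powr (1 / s - 1) + (1 - t) powr (1 / s - 1)) * \<bar>v - u\<bar>"
proof (cases "u \<le> v")
  case True
  have D: "0 \<le> v powr s - u powr s" using u True s by (simp add: powr_mono2)
  have "\<bar>(1 / s) * ((1 - t) * u powr s + t * v powr s) powr (1 / s - 1) * (v powr s - u powr s)\<bar>
     = (1 / s) * ((1 - t) * u powr s + t * v powr s) powr (1 / s - 1) * (v powr s - u powr s)"
    using D s by simp
  also have "\<dots> \<le> t powr (1 / s - 1) * (v - u)" by (rule pw_half[OF s t(1) _ u True]) (use t in simp)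
  also have "\<dots> \<le> (t powr (1 / s - 1) + (1 - t) powr (1 / s - 1)) * \<bar>v - u\<bar>"
    using True by (simp add: distrib_right)
  finally show ?thesis .
next
  case False
  then have vu: "v \<le> u" by simp
  have D: "0 \<le> u powr s - v powr s" using v vu s by (simp add: powr_mono2)
  have t': "0 < 1 - t" "1 - t \<le> 1" using t by auto
  have "\<bar>(1 / s) * ((1 - t) * u powr s + t * v powr s) powr (1 / s - 1) * (v powr s - u powr s)\<bar>
     = (1 / s) * ((1 - (1 - t)) * v powr s + (1 - t) * u powr s) powr (1 / s - 1) * (u powr s - v powr s)"
  proof -
    have i: "(1 - (1 - t)) * v powr s + (1 - t) * u powr s = (1 - t) * u powr s + t * v powr s" by simp
    have "\<bar>v powr s - u powr s\<bar> = u powr s - v powr s" using D by simp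
    then show ?thesis unfolding i using s by (simp add: abs_mult)
  qed
  also have "\<dots> \<le> (1 - t) powr (1 / s - 1) * (u - v)" by (rule pw_half[OF s t' v vu])
  also have "\<dots> \<le> (t powr (1 / s - 1) + (1 - t) powr (1 / s - 1)) * \<bar>v - u\<bar>"
    using vu by (simp add: distrib_right)
  finally show ?thesis .
qed

lemma g_integral:
  fixes s :: real assumes s: "1 \<le> s"
  shows "((\<lambda>t. t powr (1 / s - 1) + (1 - t) powr (1 / s - 1)) has_integral 2 * s) {0..1}"
proof -
  have e: "1 / s - 1 > -1" using s by simp
  have h: "((\<lambda>x. x powr (1 / s - 1)) has_integral s) {0..1}"
    using has_integral_powr_from_0[OF e, of 1] s by simp
  have h1': "((\<lambda>x. (\<lambda>y. y powr (1 / s - 1)) (- x)) has_integral s) {- 1..- 0}"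
    by (rule has_integral_reflect_real[THEN iffD2, OF h])
  have h1: "((\<lambda>x. (- x) powr (1 / s - 1)) has_integral s) {-1..0}"
    using h1' by simp
  have h2: "(((\<lambda>x. (- x) powr (1 / s - 1)) \<circ> (+) (-1)) has_integral s) {0..1}"
    using has_integral_shift_Icc_real[of "\<lambda>x. (- x) powr (1 / s - 1)" "-1" s 0 1] h1 by simp
  have h3: "((\<lambda>t. (1 - t) powr (1 / s - 1)) has_integral s) {0..1}"
    using h2 by (simp add: o_def)
  show ?thesis using has_integral_add[OF h h3] by simp
qed

lemma ck_pm:
  fixes S :: "'m::euclidean_space set" and \<sigma> :: real
  assumes S: "open S" and a: "Ck_on k S a" and b: "Ck_on k S b"
    and c1: "Ck_on k S c1" and c2: "Ck_on k S c2"
    and apos: "\<And>z. z \<in> S \<Longrightarrow> a z > 0" and bpos: "\<And>z. z \<in> S \<Longrightarrow> b z > 0"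
    and ipos: "\<And>z. z \<in> S \<Longrightarrow> c1 z * a z powr \<sigma> + c2 z * b z powr \<sigma> > 0"
  shows "Ck_on k S (\<lambda>z. (c1 z * a z powr \<sigma> + c2 z * b z powr \<sigma>) powr (1 / \<sigma>))"
proof -
  have pa: "Ck_on k S (\<lambda>z. a z powr \<sigma>)"
    by (rule ck_comp[OF S open_greaterThan ck_powr a]) (use apos in auto)
  have pb: "Ck_on k S (\<lambda>z. b z powr \<sigma>)"
    by (rule ck_comp[OF S open_greaterThan ck_powr b]) (use bpos in auto)
  have inner: "Ck_on k S (\<lambda>z. c1 z * a z powr \<sigma> + c2 z * b z powr \<sigma>)"
    by (intro ck_add ck_mult S c1 c2 pa pb)
  show ?thesis
    by (rule ck_comp[OF S open_greaterThan ck_powr inner]) (use ipos in auto)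
qed

lemma inner_pos:
  fixes mm MM A B t \<delta> :: real
  assumes mm: "0 < mm" "mm \<le> MM" and A: "mm \<le> A" "A \<le> MM" and B: "mm \<le> B" "B \<le> MM"
    and \<delta>: "\<delta> = mm / (2 * MM)" and t: "- \<delta> < t" "t < 1 + \<delta>"
  shows "(1 - t) * A + t * B > 0"
proof -
  have MM: "MM > 0" using mm by simp
  have dM: "\<delta> * MM = mm / 2" using MM by (simp add: \<delta>)
  consider "t \<le> 0" | "0 \<le> t \<and> t \<le> 1" | "1 \<le> t" by linarith
  then show ?thesis
  proof cases
    case 1
    have "(1 - t) * A + t * B = A + (- t) * (A - B)" by (simp add: algebra_simps)
    also have "(- t) * (A - B) \<ge> - ((- t) * MM)"
    proof -
      have "A - B \<ge> - MM" using A B mm by linarith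
      then have "(- t) * (A - B) \<ge> (- t) * (- MM)" using 1 by (intro mult_left_mono) auto
      then show ?thesis by simp
    qed
    moreover have "(- t) * MM \<le> \<delta> * MM" using t 1 MM by (intro mult_right_mono) auto
    ultimately show ?thesis using A dM mm by linarith
  next
    case 2
    have "(1 - t) * A \<ge> (1 - t) * mm" using 2 A by (intro mult_left_mono) auto
    moreover have "t * B \<ge> t * mm" using 2 B by (intro mult_left_mono) auto
    ultimately show ?thesis using mm by (simp add: algebra_simps)
  next
    case 3
    have "(1 - t) * A + t * B = B + (t - 1) * (B - A)" by (simp add: algebra_simps)
    also have "(t - 1) * (B - A) \<ge> - ((t - 1) * MM)"
    proof -
      have "B - A \<ge> - MM" using A B mm by linarith
      then have "(t - 1) * (B - A) \<ge> (t - 1) * (- MM)" using 3 by (intro mult_left_mono) auto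
      then show ?thesis by simp
    qed
    moreover have "(t - 1) * MM \<le> \<delta> * MM" using t 3 MM by (intro mult_right_mono) auto
    ultimately show ?thesis using B dM mm by linarith
  qed
qed

locale setting = mfd X A + lpX M p
  for X :: "'a::t2_space set" and A :: "('a set \<times> ('a \<Rightarrow> 'n::euclidean_space)) set"
    and M :: "'a measure" and p :: real +
  fixes q r :: real
  assumes spaceX: "space M = X" and q1: "1 \<le> q" and qp: "q \<le> p" and rpos: "r > 0"
begin

definition "\<sigma> = p / q"

lemma sig1: "\<sigma> \<ge> 1" using q1 qp by (simp add: \<sigma>_def)

definition pm :: "('a \<Rightarrow> real) \<Rightarrow> ('a \<Rightarrow> real) \<Rightarrow> real \<Rightarrow> 'a \<Rightarrow> real" where
  "pm f0 f1 t x = (if x \<in> X then ((1 - t) * f0 x powr \<sigma> + t * f1 x powr \<sigma>) powr (1 / \<sigma>) else 0)"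

definition pw :: "('a \<Rightarrow> real) \<Rightarrow> ('a \<Rightarrow> real) \<Rightarrow> real \<Rightarrow> 'a \<Rightarrow> real" where
  "pw f0 f1 t x = (1 / \<sigma>) * ((1 - t) * f0 x powr \<sigma> + t * f1 x powr \<sigma>) powr (1 / \<sigma> - 1) * (f1 x powr \<sigma> - f0 x powr \<sigma>)"

lemma sph:
  assumes "f \<in> sphere_plus X A M p q r"
  shows "f \<in> Cinf X A" "\<And>x. x \<in> X \<Longrightarrow> f x > 0" "avg (\<lambda>x. f x powr \<sigma>) = r powr \<sigma>"
    "continuous_on X f" "\<And>x. x \<notin> X \<Longrightarrow> f x = 0"
  using assms Cinf_cont by (auto simp: sphere_plus_def avg_def \<sigma>_def Cinf_def)

lemma sph_bounds:
  assumes "f \<in> sphere_plus X A M p q r"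
  shows "\<exists>m B. 0 < m \<and> m \<le> B \<and> (\<forall>x\<in>X. m \<le> f x \<and> f x \<le> B)"
proof (cases "X = {}")
  case True then show ?thesis by (intro exI[of _ 1]) auto
next
  case False
  obtain x0 where x0: "x0 \<in> X" "\<forall>y\<in>X. f x0 \<le> f y"
    using continuous_attains_inf[OF cptX False sph(4)[OF assms]] by blast
  obtain x1 where x1: "x1 \<in> X" "\<forall>y\<in>X. f y \<le> f x1"
    using continuous_attains_sup[OF cptX False sph(4)[OF assms]] by blast
  show ?thesis
    using x0 x1 sph(2)[OF assms x0(1)] by (intro exI[of _ "f x0"] exI[of _ "f x1"]) auto
qed

lemma cont_int: "continuous_on X F \<Longrightarrow> integrable M (F :: 'a \<Rightarrow> real)"
proof -
  assume c: "continuous_on X F"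
  then have g: "good F" using cont_good spaceX by simp
  then obtain B where "F \<in> borel_measurable M" "\<forall>x\<in>space M. \<bar>F x\<bar> \<le> B" unfolding good_def by blast
  then show "integrable M F" by (intro integrable_const_bound[where B=B]) auto
qed

lemma inner01: "0 \<le> t \<Longrightarrow> t \<le> 1 \<Longrightarrow> u > 0 \<Longrightarrow> v > 0 \<Longrightarrow> (1 - t) * u powr \<sigma> + t * v powr \<sigma> > 0"
proof -
  assume t: "0 \<le> t" "t \<le> 1" and uv: "u > 0" "v > 0"
  show ?thesis
  proof (cases "t = 0")
    case True then show ?thesis using uv by simp
  next
    case False
    then have "t * v powr \<sigma> > 0" using t uv by simp
    moreover have "(1 - t) * u powr \<sigma> \<ge> 0" using t by simp
    ultimately show ?thesis by linarith
  qed
qed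

lemma pm_pow: "x \<in> X \<Longrightarrow> 0 \<le> t \<Longrightarrow> t \<le> 1 \<Longrightarrow> f0 x > 0 \<Longrightarrow> f1 x > 0 \<Longrightarrow>
   pm f0 f1 t x powr \<sigma> = (1 - t) * f0 x powr \<sigma> + t * f1 x powr \<sigma>"
  using inner01[of t "f0 x" "f1 x"] sig1 by (simp add: pm_def powr_powr)

context
  fixes f0 f1 assumes f0: "f0 \<in> sphere_plus X A M p q r" and f1: "f1 \<in> sphere_plus X A M p q r"
begin

lemma pm_ends: "pm f0 f1 0 = f0" "pm f0 f1 1 = f1"
proof -
  have "pm f0 f1 0 x = f0 x" for x
    using sph(2,5)[OF f0, of x] sig1 by (cases "x \<in> X") (auto simp: pm_def powr_powr)
  then show "pm f0 f1 0 = f0" by auto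
  have "pm f0 f1 1 x = f1 x" for x
    using sph(2,5)[OF f1, of x] sig1 by (cases "x \<in> X") (auto simp: pm_def powr_powr)
  then show "pm f0 f1 1 = f1" by auto
qed

lemma pm_Cinf: assumes t: "0 \<le> t" "t \<le> 1" shows "pm f0 f1 t \<in> Cinf X A"
  unfolding Cinf_def
proof (intro CollectI conjI allI impI ballI)
  show "x \<notin> X \<Longrightarrow> pm f0 f1 t x = 0" for x by (simp add: pm_def)
  fix c assume c: "c \<in> A"
  obtain U \<phi> where c': "c = (U, \<phi>)" by fastforce
  with c have U: "(U, \<phi>) \<in> A" by simp
  have ck: "Ck_on k (\<phi> ` U) (\<lambda>y. pm f0 f1 t (inv_into U \<phi> y))" for k
  proof (rule ck_cong[OF chart(2)[OF U]])
    show "Ck_on k (\<phi> ` U) (\<lambda>y. ((1 - t) * f0 (inv_into U \<phi> y) powr \<sigma> + t * f1 (inv_into U \<phi> y) powr \<sigma>) powr (1 / \<sigma>))"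
    proof (rule ck_pm[OF chart(2)[OF U] Cinf_chart[OF sph(1)[OF f0] U] Cinf_chart[OF sph(1)[OF f1] U] ck_const ck_const])
      fix y assume y: "y \<in> \<phi> ` U"
      have x: "inv_into U \<phi> y \<in> X" using inv_in[OF y] chart(5)[OF U] by blast
      show "f0 (inv_into U \<phi> y) > 0" "f1 (inv_into U \<phi> y) > 0"
        using sph(2)[OF f0 x] sph(2)[OF f1 x] by auto
      then show "(1 - t) * f0 (inv_into U \<phi> y) powr \<sigma> + t * f1 (inv_into U \<phi> y) powr \<sigma> > 0"
        using inner01 t by blast
    qed
    fix y assume y: "y \<in> \<phi> ` U"
    have x: "inv_into U \<phi> y \<in> X" using inv_in[OF y] chart(5)[OF U] by blast
    then show "((1 - t) * f0 (inv_into U \<phi> y) powr \<sigma> + t * f1 (inv_into U \<phi> y) powr \<sigma>) powr (1 / \<sigma>)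
       = pm f0 f1 t (inv_into U \<phi> y)" by (simp add: pm_def)
  qed
  show "case c of (U, \<phi>) \<Rightarrow> smooth_on_open (\<phi> ` U) (\<lambda>y. pm f0 f1 t (inv_into U \<phi> y))"
    unfolding c' smooth_on_open_def using ck chart(2)[OF U] by simp
qed

lemma pm_sphere: assumes t: "0 \<le> t" "t \<le> 1" shows "pm f0 f1 t \<in> sphere_plus X A M p q r"
proof -
  have pos: "pm f0 f1 t x > 0" if x: "x \<in> X" for x
    using inner01[OF t sph(2)[OF f0 x] sph(2)[OF f1 x]] x by (simp add: pm_def)
  have c0: "continuous_on X (\<lambda>x. f0 x powr \<sigma>)" "continuous_on X (\<lambda>x. f1 x powr \<sigma>)"
    using sph(4,2)[OF f0] sph(4,2)[OF f1] by (auto intro!: continuous_intros simp: less_imp_neq[symmetric])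
  have "avg (\<lambda>x. pm f0 f1 t x powr \<sigma>) = avg (\<lambda>x. (1 - t) * f0 x powr \<sigma> + t * f1 x powr \<sigma>)"
    by (rule avg_cong) (use pm_pow sph(2)[OF f0] sph(2)[OF f1] t spaceX in auto)
  also have "\<dots> = (1 - t) * avg (\<lambda>x. f0 x powr \<sigma>) + t * avg (\<lambda>x. f1 x powr \<sigma>)"
    using cont_int[OF c0(1)] cont_int[OF c0(2)] by (simp add: avg_add avg_cmult)
  also have "\<dots> = r powr \<sigma>" using sph(3)[OF f0] sph(3)[OF f1] by (simp add: algebra_simps)
  finally have "avg (\<lambda>x. pm f0 f1 t x powr \<sigma>) = r powr \<sigma>" .
  then show ?thesis
    unfolding sphere_plus_def using pm_Cinf[OF t] pos by (simp add: avg_def \<sigma>_def)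
qed

lemma pm_bounds: "\<exists>mm MM. 0 < mm \<and> mm \<le> MM \<and> (\<forall>x\<in>X. mm \<le> f0 x powr \<sigma> \<and> f0 x powr \<sigma> \<le> MM \<and> mm \<le> f1 x powr \<sigma> \<and> f1 x powr \<sigma> \<le> MM)"
proof -
  obtain m0 B0 where b0: "0 < m0" "m0 \<le> B0" "\<forall>x\<in>X. m0 \<le> f0 x \<and> f0 x \<le> B0" using sph_bounds[OF f0] by blast
  obtain m1 B1 where b1: "0 < m1" "m1 \<le> B1" "\<forall>x\<in>X. m1 \<le> f1 x \<and> f1 x \<le> B1" using sph_bounds[OF f1] by blast
  define m where "m = min m0 m1"
  define B where "B = max B0 B1"
  have m: "0 < m" "m \<le> B" using b0 b1 by (auto simp: m_def B_def)
  have s0: "0 < \<sigma>" using sig1 by simp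
  have H: "\<forall>x\<in>X. m powr \<sigma> \<le> f0 x powr \<sigma> \<and> f0 x powr \<sigma> \<le> B powr \<sigma> \<and> m powr \<sigma> \<le> f1 x powr \<sigma> \<and> f1 x powr \<sigma> \<le> B powr \<sigma>"
  proof
    fix x assume x: "x \<in> X"
    have "m \<le> f0 x" "f0 x \<le> B" "m \<le> f1 x" "f1 x \<le> B" using b0(3) b1(3) x by (auto simp: m_def B_def)
    then show "m powr \<sigma> \<le> f0 x powr \<sigma> \<and> f0 x powr \<sigma> \<le> B powr \<sigma> \<and> m powr \<sigma> \<le> f1 x powr \<sigma> \<and> f1 x powr \<sigma> \<le> B powr \<sigma>"
      using m s0 by (auto intro!: powr_mono2)
  qed
  have "0 < m powr \<sigma>" using m by simp
  moreover have "m powr \<sigma> \<le> B powr \<sigma>" using m s0 by (intro powr_mono2) auto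
  ultimately show ?thesis using H by blast
qed

lemma pm_smooth_curve: "smooth_curve_on X A 0 1 (pm f0 f1)"
  unfolding smooth_curve_on_def
proof (intro ballI)
  fix c assume c: "c \<in> A"
  obtain U \<phi> where c': "c = (U, \<phi>)" by fastforce
  with c have U: "(U, \<phi>) \<in> A" by simp
  obtain mm MM where mM: "0 < mm" "mm \<le> MM"
    "\<And>x. x \<in> X \<Longrightarrow> mm \<le> f0 x powr \<sigma> \<and> f0 x powr \<sigma> \<le> MM \<and> mm \<le> f1 x powr \<sigma> \<and> f1 x powr \<sigma> \<le> MM"
    using pm_bounds by blast
  define \<delta> where "\<delta> = mm / (2 * MM)"
  have \<delta>: "\<delta> > 0" using mM by (simp add: \<delta>_def)
  define T where "T = {- \<delta> <..< 1 + \<delta>}"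
  define a where "a y = f0 (inv_into U \<phi> y)" for y
  define b where "b y = f1 (inv_into U \<phi> y)" for y
  define g where "g z = ((1 + (-1) * fst z) * a (snd z) powr \<sigma> + fst z * b (snd z) powr \<sigma>) powr (1 / \<sigma>)" for z
  have opS: "open (T \<times> \<phi> ` U)" unfolding T_def by (intro open_Times chart(2)[OF U]) simp
  have xin: "inv_into U \<phi> y \<in> X" if "y \<in> \<phi> ` U" for y using inv_in[OF that] chart(5)[OF U] by blast
  have ck: "Ck_on k (T \<times> \<phi> ` U) g" for k
    unfolding g_def
  proof (rule ck_pm[OF opS])
    have sn: "snd ` (T \<times> \<phi> ` U) \<subseteq> \<phi> ` U" by auto
    show "Ck_on k (T \<times> \<phi> ` U) (\<lambda>z. a (snd z))"
      unfolding a_def by (rule ck_linear_comp[OF linear_snd chart(2)[OF U] opS sn Cinf_chart[OF sph(1)[OF f0] U]])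
    show "Ck_on k (T \<times> \<phi> ` U) (\<lambda>z. b (snd z))"
      unfolding b_def by (rule ck_linear_comp[OF linear_snd chart(2)[OF U] opS sn Cinf_chart[OF sph(1)[OF f1] U]])
    show "Ck_on k (T \<times> \<phi> ` U) (\<lambda>z. 1 + - 1 * fst z)"
      by (intro ck_add opS ck_const ck_cmult ck_linear linear_fst)
    show "Ck_on k (T \<times> \<phi> ` U) (\<lambda>z. fst z)"
      by (intro ck_linear linear_fst)
    fix z assume z: "z \<in> T \<times> \<phi> ` U"
    have x: "inv_into U \<phi> (snd z) \<in> X" using z xin by auto
    show "a (snd z) > 0" "b (snd z) > 0" using sph(2)[OF f0 x] sph(2)[OF f1 x] by (auto simp: a_def b_def)
    have "(1 - fst z) * a (snd z) powr \<sigma> + fst z * b (snd z) powr \<sigma> > 0"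
      by (rule inner_pos[OF mM(1,2) _ _ _ _ \<delta>_def]) (use mM(3)[OF x] z in \<open>auto simp: a_def b_def T_def\<close>)
    then show "(1 + - 1 * fst z) * a (snd z) powr \<sigma> + fst z * b (snd z) powr \<sigma> > 0" by simp
  qed
  show "case c of (U, \<phi>) \<Rightarrow> \<exists>T g. open T \<and> {0..1} \<subseteq> T \<and> smooth_on_open (T \<times> \<phi> ` U) g \<and>
          (\<forall>t\<in>{0..1}. \<forall>y\<in>\<phi> ` U. g (t, y) = pm f0 f1 t (inv_into U \<phi> y))"
    unfolding c'
  proof (simp only: prod.case, intro exI[of _ T] exI[of _ g] conjI ballI)
    show "open T" by (simp add: T_def)
    show "{0..1} \<subseteq> T" using \<delta> by (auto simp: T_def)
    show "smooth_on_open (T \<times> \<phi> ` U) g" using ck opS by (simp add: smooth_on_open_def)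
    fix t :: real and y assume "t \<in> {0..1}" "y \<in> \<phi> ` U"
    then show "g (t, y) = pm f0 f1 t (inv_into U \<phi> y)"
      using xin by (simp add: g_def pm_def a_def b_def)
  qed
qed

lemma pm_pw: "piecewise_smooth_curve X A (pm f0 f1)"
  unfolding piecewise_smooth_curve_def
proof (intro exI[of _ "{0,1}"] conjI ballI impI)
  fix a b :: real assume "a \<in> {0, 1}" "b \<in> {0, 1}" "a < b \<and> {a<..<b} \<inter> {0, 1} = {}"
  then have "a = 0" "b = 1" by auto
  then show "smooth_curve_on X A a b (pm f0 f1)" using pm_smooth_curve by simp
qed auto

lemma pm_deriv:
  assumes x: "x \<in> X" and t: "0 \<le> t" "t \<le> 1"
  shows "((\<lambda>s. pm f0 f1 s x) has_real_derivative pw f0 f1 t x) (at t)"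
proof -
  define a where "a = f0 x powr \<sigma>"
  define b where "b = f1 x powr \<sigma>"
  have I: "(1 - t) * a + t * b > 0" unfolding a_def b_def by (rule inner01[OF t sph(2)[OF f0 x] sph(2)[OF f1 x]])
  have d1: "((\<lambda>s. (1 - s) * a + s * b) has_real_derivative (b - a)) (at t)"
    by (auto intro!: derivative_eq_intros)
  have d2: "((\<lambda>s. ((1 - s) * a + s * b) powr (1 / \<sigma>)) has_real_derivative
      (1 / \<sigma>) * ((1 - t) * a + t * b) powr (1 / \<sigma> - 1) * (b - a)) (at t)"
    using DERIV_chain2[OF has_real_derivative_powr[OF I, of "1 / \<sigma>"] d1] by (simp add: mult.assoc)
  have e: "(\<lambda>s. pm f0 f1 s x) = (\<lambda>s. ((1 - s) * a + s * b) powr (1 / \<sigma>))"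
    using x by (simp add: pm_def a_def b_def fun_eq_iff)
  show ?thesis unfolding e using d2 by (simp add: pw_def a_def b_def)
qed

lemma pm_vel:
  assumes x: "x \<in> X" and t: "0 \<le> t" "t \<le> 1"
  shows "curve_velocity (pm f0 f1) t x = pw f0 f1 t x"
  unfolding curve_velocity_def
  using pm_deriv[OF x t] by (simp add: has_real_derivative_iff_has_vector_derivative vector_derivative_at)

lemma pw_cont: "continuous_on {0..1} (\<lambda>t. Lp_norm M p (pw f0 f1 t))"
proof -
  obtain mm MM where mM: "0 < mm" "mm \<le> MM"
    "\<And>x. x \<in> X \<Longrightarrow> mm \<le> f0 x powr \<sigma> \<and> f0 x powr \<sigma> \<le> MM \<and> mm \<le> f1 x powr \<sigma> \<and> f1 x powr \<sigma> \<le> MM"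
    using pm_bounds by blast
  have e: "1 / \<sigma> - 1 \<le> 0" using sig1 by simp
  show ?thesis
    unfolding continuous_on_eq_continuous_within
  proof
    fix t0 :: real assume t0: "t0 \<in> {0..1}"
    show "continuous (at t0 within {0..1}) (\<lambda>t. Lp_norm M p (pw f0 f1 t))"
    proof (rule Lp_cont[where B="(1 / \<sigma>) * mm powr (1 / \<sigma> - 1) * MM"])
      fix t :: real assume t: "t \<in> {0..1}"
      have "continuous_on X (pw f0 f1 t)"
        unfolding pw_def[abs_def]
        using sph(4,2)[OF f0] sph(4,2)[OF f1] inner01[of t] t sig1
        by (auto intro!: continuous_intros simp: less_imp_neq[symmetric])
      then show "pw f0 f1 t \<in> borel_measurable M" using cont_meas spaceX by simp
      fix x assume x: "x \<in> space M"
      then have x: "x \<in> X" using spaceX by simp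
      have b: "mm \<le> f0 x powr \<sigma>" "f0 x powr \<sigma> \<le> MM" "mm \<le> f1 x powr \<sigma>" "f1 x powr \<sigma> \<le> MM" using mM(3)[OF x] by auto
      have I: "mm \<le> (1 - t) * f0 x powr \<sigma> + t * f1 x powr \<sigma>"
      proof -
        have "(1 - t) * mm \<le> (1 - t) * f0 x powr \<sigma>" "t * mm \<le> t * f1 x powr \<sigma>"
          using t b by (auto intro!: mult_left_mono)
        then show ?thesis by (simp add: algebra_simps)
      qed
      have "((1 - t) * f0 x powr \<sigma> + t * f1 x powr \<sigma>) powr (1 / \<sigma> - 1) \<le> mm powr (1 / \<sigma> - 1)"
        by (rule powr_mono2'[OF e mM(1) I])
      moreover have "\<bar>f1 x powr \<sigma> - f0 x powr \<sigma>\<bar> \<le> MM" using b mM by linarith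
      ultimately have "((1 - t) * f0 x powr \<sigma> + t * f1 x powr \<sigma>) powr (1 / \<sigma> - 1) * \<bar>f1 x powr \<sigma> - f0 x powr \<sigma>\<bar>
          \<le> mm powr (1 / \<sigma> - 1) * MM"
        by (intro mult_mono) auto
      then show "\<bar>pw f0 f1 t x\<bar> \<le> (1 / \<sigma>) * mm powr (1 / \<sigma> - 1) * MM"
        unfolding pw_def using sig1 by (simp add: abs_mult divide_right_mono)
    next
      fix x assume x: "x \<in> space M"
      then have x: "x \<in> X" using spaceX by simp
      have "continuous (at t0) (\<lambda>t. pw f0 f1 t x)"
        unfolding pw_def
        using inner01[OF _ _ sph(2)[OF f0 x] sph(2)[OF f1 x]] t0 sig1
        by (auto intro!: continuous_intros simp: less_imp_neq[symmetric])
      then show "continuous (at t0 within {0..1}) (\<lambda>t. pw f0 f1 t x)"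
        by (rule continuous_at_imp_continuous_at_within)
    qed (use t0 in auto)
  qed
qed

lemma pm_length: "curve_length M p (pm f0 f1) \<le> 2 * \<sigma> * Lp_norm M p (\<lambda>x. f1 x - f0 x)"
proof -
  define L where "L = Lp_norm M p (\<lambda>x. f1 x - f0 x)"
  define g where "g t = t powr (1 / \<sigma> - 1) + (1 - t) powr (1 / \<sigma> - 1)" for t
  have gi: "((\<lambda>t. g t * L) has_integral (2 * \<sigma>) * L) {0..1}"
    unfolding g_def by (rule has_integral_mult_left[OF g_integral[OF sig1]])
  have gi': "((\<lambda>t. g t * L) has_integral (2 * \<sigma>) * L) {0<..<1}"
    using gi has_integral_open_interval[of "\<lambda>t. g t * L" "(2 * \<sigma>) * L" 0 "1::real"] by simp
  have Si: "(\<lambda>t. Lp_norm M p (pw f0 f1 t)) integrable_on {0<..<1}"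
    using integrable_continuous_interval[OF pw_cont] integrable_on_open_interval_real by blast
  have goodd: "good (\<lambda>x. f1 x - f0 x)"
    using sph(4)[OF f0] sph(4)[OF f1] spaceX by (intro cont_good continuous_intros) auto
  have le: "Lp_norm M p (pw f0 f1 t) \<le> g t * L" if t: "t \<in> {0<..<1}" for t
  proof -
    have gt: "g t \<ge> 0" by (simp add: g_def)
    have "Lp_norm M p (pw f0 f1 t) \<le> Lp_norm M p (\<lambda>x. g t * (f1 x - f0 x))"
    proof (rule Lp_mono)
      have "continuous_on X (pw f0 f1 t)"
        unfolding pw_def[abs_def]
        using sph(4,2)[OF f0] sph(4,2)[OF f1] inner01[of t] t sig1
        by (auto intro!: continuous_intros simp: less_imp_neq[symmetric])
      then show "pw f0 f1 t \<in> borel_measurable M" using cont_meas spaceX by simp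
      show "good (\<lambda>x. g t * (f1 x - f0 x))" by (rule good_cmult[OF goodd])
      fix x assume "x \<in> space M"
      then have x: "x \<in> X" using spaceX by simp
      have "\<bar>pw f0 f1 t x\<bar> \<le> g t * \<bar>f1 x - f0 x\<bar>"
        unfolding pw_def g_def
        by (rule pw_bound[OF sig1 _ _ sph(2)[OF f0 x] sph(2)[OF f1 x]]) (use t in auto)
      then show "\<bar>pw f0 f1 t x\<bar> \<le> \<bar>g t * (f1 x - f0 x)\<bar>" using gt by (simp add: abs_mult)
    qed
    also have "\<dots> = g t * L" using gt by (simp add: Lp_cmult L_def)
    finally show ?thesis .
  qed
  have "curve_length M p (pm f0 f1) = integral {0<..<1} (\<lambda>t. Lp_norm M p (curve_velocity (pm f0 f1) t))"
    unfolding curve_length_def by (rule integral_open_interval_real)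
  also have "\<dots> = integral {0<..<1} (\<lambda>t. Lp_norm M p (pw f0 f1 t))"
  proof (rule integral_cong)
    fix t :: real assume t: "t \<in> {0<..<1}"
    show "Lp_norm M p (curve_velocity (pm f0 f1) t) = Lp_norm M p (pw f0 f1 t)"
      by (rule Lp_cong) (use pm_vel t spaceX in auto)
  qed
  also have "\<dots> \<le> integral {0<..<1} (\<lambda>t. g t * L)"
    by (rule integral_le[OF Si]) (use gi' le in \<open>auto simp: has_integral_integrable\<close>)
  also have "\<dots> = 2 * \<sigma> * L" by (rule integral_unique[OF gi'])
  finally show ?thesis by (simp add: L_def)
qed

end

end

context setting
begin

lemma chart_curve:
  fixes g :: "real \<times> 'n \<Rightarrow> real" and \<gamma> :: "real \<Rightarrow> 'a \<Rightarrow> real"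
  assumes U: "(U, \<phi>) \<in> A" and T: "{a..b} \<subseteq> T"
    and sg: "smooth_on_open (T \<times> \<phi> ` U) g"
    and eq: "\<forall>t\<in>{a..b}. \<forall>y\<in>\<phi> ` U. g (t, y) = \<gamma> t (inv_into U \<phi> y)"
  shows "\<And>t x. t \<in> {a..b} \<Longrightarrow> x \<in> U \<Longrightarrow> \<gamma> t x = g (t, \<phi> x)"
    and "\<And>t x. t \<in> {a..b} \<Longrightarrow> x \<in> U \<Longrightarrow>
      ((\<lambda>s. \<gamma> s x) has_vector_derivative frechet_derivative g (at (t, \<phi> x)) (1, 0)) (at t within {a..b})"
    and "continuous_on ({a..b} \<times> U) (\<lambda>z. g (fst z, \<phi> (snd z)))"
    and "continuous_on ({a..b} \<times> U) (\<lambda>z. frechet_derivative g (at (fst z, \<phi> (snd z))) (1, 0))"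
proof -
  have ck: "Ck_on k (T \<times> \<phi> ` U) g" for k using sg by (simp add: smooth_on_open_def)
  have B: "(1::real, 0::'n) \<in> Basis" by (simp add: Basis_prod_def)
  have diff: "g differentiable (at z)" if "z \<in> T \<times> \<phi> ` U" for z
  proof -
    have "\<forall>x\<in>T \<times> \<phi> ` U. g differentiable (at x)" using ck[of 1] unfolding One_nat_def Ck_on.simps by blast
    then show ?thesis using that by blast
  qed
  have c0: "continuous_on (T \<times> \<phi> ` U) g" using ck[of 0] by simp
  have c1: "continuous_on (T \<times> \<phi> ` U) (\<lambda>z. frechet_derivative g (at z) (1, 0))"
  proof -
    have "\<forall>i\<in>Basis. Ck_on 0 (T \<times> \<phi> ` U) (\<lambda>x. frechet_derivative g (at x) i)"
      using ck[of 1] unfolding One_nat_def Ck_on.simps by blast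
    then show ?thesis using B by simp
  qed
  show eqx: "\<gamma> t x = g (t, \<phi> x)" if "t \<in> {a..b}" "x \<in> U" for t x
    using eq that inv_chart[OF U] by auto
  show "((\<lambda>s. \<gamma> s x) has_vector_derivative frechet_derivative g (at (t, \<phi> x)) (1, 0)) (at t within {a..b})"
    if t: "t \<in> {a..b}" and x: "x \<in> U" for t x
  proof -
    have z: "(t, \<phi> x) \<in> T \<times> \<phi> ` U" using t x T by auto
    define G' where "G' = frechet_derivative g (at (t, \<phi> x))"
    have dg: "(g has_derivative G') (at (t, \<phi> x))"
      unfolding G'_def using diff[OF z] frechet_derivative_works by blast
    have lin: "linear G'" using dg by (simp add: has_derivative_linear)
    have dp: "((\<lambda>s. (s, \<phi> x)) has_derivative (\<lambda>h. (h, 0))) (at t)"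
      by (auto intro!: derivative_eq_intros)
    have "((\<lambda>s. g (s, \<phi> x)) has_derivative (\<lambda>h. G' (h, 0))) (at t)"
      using diff_chain_at[OF dp, of g G'] dg by (simp add: o_def)
    moreover have "(\<lambda>h. G' (h, 0)) = (\<lambda>h. h *\<^sub>R G' (1, 0))"
    proof
      fix h :: real
      have "(h, 0::'n) = h *\<^sub>R (1, 0)" by simp
      then show "G' (h, 0) = h *\<^sub>R G' (1, 0)" using lin by (metis linear_scale)
    qed
    ultimately have "((\<lambda>s. g (s, \<phi> x)) has_vector_derivative G' (1, 0)) (at t)"
      by (simp add: has_vector_derivative_def)
    then have hv: "((\<lambda>s. g (s, \<phi> x)) has_vector_derivative G' (1, 0)) (at t within {a..b})"
      by (rule has_vector_derivative_at_within)
    show ?thesis unfolding G'_def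
      by (rule has_vector_derivative_transform[OF t _ hv[unfolded G'_def]]) (use eqx x in auto)
  qed
  have cm: "continuous_on ({a..b} \<times> U) (\<lambda>z. (fst z, \<phi> (snd z)))"
    by (intro continuous_intros continuous_on_compose2[OF chart(4)[OF U]]) auto
  have im: "(\<lambda>z. (fst z, \<phi> (snd z))) ` ({a..b} \<times> U) \<subseteq> T \<times> \<phi> ` U" using T by auto
  show "continuous_on ({a..b} \<times> U) (\<lambda>z. g (fst z, \<phi> (snd z)))"
    by (rule continuous_on_compose2[OF c0 cm im])
  show "continuous_on ({a..b} \<times> U) (\<lambda>z. frechet_derivative g (at (fst z, \<phi> (snd z))) (1, 0))"
    by (rule continuous_on_compose2[OF c1 cm im])
qed

lemma piece:
  fixes \<gamma> :: "real \<Rightarrow> 'a \<Rightarrow> real"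
  assumes ab: "a < b" and sc: "smooth_curve_on X A a b \<gamma>"
  shows "(\<lambda>t. Lp_norm M p (curve_velocity \<gamma> t)) integrable_on {a..b}"
    and "Lp_norm M p (\<lambda>x. \<gamma> b x - \<gamma> a x) \<le> integral {a..b} (\<lambda>t. Lp_norm M p (curve_velocity \<gamma> t))"
proof -
  have loc: "\<exists>T g. {a..b} \<subseteq> T \<and> smooth_on_open (T \<times> \<phi> ` U) g \<and>
      (\<forall>t\<in>{a..b}. \<forall>y\<in>\<phi> ` U. g (t, y) = \<gamma> t (inv_into U \<phi> y))" if U: "(U, \<phi>) \<in> A" for U \<phi>
  proof -
    have "case (U, \<phi>) of (U, \<phi>) \<Rightarrow> \<exists>T g. open T \<and> {a..b} \<subseteq> T \<and> smooth_on_open (T \<times> \<phi> ` U) g \<and>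
        (\<forall>t\<in>{a..b}. \<forall>y\<in>\<phi> ` U. g (t, y) = \<gamma> t (inv_into U \<phi> y))"
      using sc U unfolding smooth_curve_on_def by (rule bspec)
    then show ?thesis by auto
  qed
  define w where "w t x = vector_derivative (\<lambda>s. \<gamma> s x) (at t within {a..b})" for t x
  have abI: "{a..b} = cbox a b" by simp
  have wchart: "w t x = frechet_derivative g (at (t, \<phi> x)) (1, 0)"
    and dchart: "((\<lambda>s. \<gamma> s x) has_vector_derivative w t x) (at t within {a..b})"
    if U: "(U, \<phi>) \<in> A" and T: "{a..b} \<subseteq> T" and sg: "smooth_on_open (T \<times> \<phi> ` U) g"
      and eq: "\<forall>t\<in>{a..b}. \<forall>y\<in>\<phi> ` U. g (t, y) = \<gamma> t (inv_into U \<phi> y)"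
      and t: "t \<in> {a..b}" and x: "x \<in> U" for U \<phi> T g t x
  proof -
    have d: "((\<lambda>s. \<gamma> s x) has_vector_derivative frechet_derivative g (at (t, \<phi> x)) (1, 0)) (at t within {a..b})"
      by (rule chart_curve(2)[OF U T sg eq t x])
    show "w t x = frechet_derivative g (at (t, \<phi> x)) (1, 0)"
      unfolding w_def using vector_derivative_within_cbox[OF ab, of t "\<lambda>s. \<gamma> s x"] d t by simp
    then show "((\<lambda>s. \<gamma> s x) has_vector_derivative w t x) (at t within {a..b})" using d by simp
  qed
  have der: "((\<lambda>s. \<gamma> s x) has_vector_derivative w t x) (at t within {a..b})"
    if x: "x \<in> space M" and t: "t \<in> {a..b}" for x t
  proof -
    obtain U \<phi> where U: "(U, \<phi>) \<in> A" "x \<in> U" using cover x spaceX by blast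
    obtain T g where Tg: "{a..b} \<subseteq> T" "smooth_on_open (T \<times> \<phi> ` U) g"
      "\<forall>t\<in>{a..b}. \<forall>y\<in>\<phi> ` U. g (t, y) = \<gamma> t (inv_into U \<phi> y)" using loc[OF U(1)] by blast
    show ?thesis by (rule dchart[OF U(1) Tg t U(2)])
  qed
  have contw: "continuous_on ({a..b} \<times> space M) (\<lambda>z. w (fst z) (snd z))"
    and contg: "continuous_on ({a..b} \<times> space M) (\<lambda>z. \<gamma> (fst z) (snd z))"
  proof -
    have H: "\<exists>N. openin (top_of_set ({a..b} \<times> X)) N \<and> z \<in> N \<and>
        continuous_on N (\<lambda>z. w (fst z) (snd z)) \<and> continuous_on N (\<lambda>z. \<gamma> (fst z) (snd z))"
      if z: "z \<in> {a..b} \<times> X" for z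
    proof -
      obtain U \<phi> where U: "(U, \<phi>) \<in> A" "snd z \<in> U" using cover z by fastforce
      obtain T g where Tg: "{a..b} \<subseteq> T" "smooth_on_open (T \<times> \<phi> ` U) g"
        "\<forall>t\<in>{a..b}. \<forall>y\<in>\<phi> ` U. g (t, y) = \<gamma> t (inv_into U \<phi> y)" using loc[OF U(1)] by blast
      obtain Op where Op: "open Op" "U = X \<inter> Op" using chart(1)[OF U(1)] by (auto simp: openin_open)
      have N: "({a..b} \<times> X) \<inter> (UNIV \<times> Op) = {a..b} \<times> U" using Op by auto
      have oN: "openin (top_of_set ({a..b} \<times> X)) ({a..b} \<times> U)"
        unfolding N[symmetric] by (rule openin_open_Int) (simp add: open_Times Op(1))
      have cw: "continuous_on ({a..b} \<times> U) (\<lambda>z. w (fst z) (snd z))"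
        by (rule continuous_on_eq[OF chart_curve(4)[OF U(1) Tg]]) (use wchart[OF U(1) Tg] in auto)
      have cg: "continuous_on ({a..b} \<times> U) (\<lambda>z. \<gamma> (fst z) (snd z))"
        by (rule continuous_on_eq[OF chart_curve(3)[OF U(1) Tg]]) (use chart_curve(1)[OF U(1) Tg] in auto)
      show ?thesis using oN cw cg z U(2) by (intro exI[of _ "{a..b} \<times> U"]) (auto simp: mem_Times_iff)
    qed
    show "continuous_on ({a..b} \<times> space M) (\<lambda>z. w (fst z) (snd z))"
      unfolding spaceX
    proof (rule continuous_on_local)
      fix z assume "z \<in> {a..b} \<times> X"
      from H[OF this] show "\<exists>N. openin (top_of_set ({a..b} \<times> X)) N \<and> z \<in> N \<and> continuous_on N (\<lambda>z. w (fst z) (snd z))"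
        by blast
    qed
    show "continuous_on ({a..b} \<times> space M) (\<lambda>z. \<gamma> (fst z) (snd z))"
      unfolding spaceX
    proof (rule continuous_on_local)
      fix z assume "z \<in> {a..b} \<times> X"
      from H[OF this] show "\<exists>N. openin (top_of_set ({a..b} \<times> X)) N \<and> z \<in> N \<and> continuous_on N (\<lambda>z. \<gamma> (fst z) (snd z))"
        by blast
    qed
  qed
  note ub = ub_piece[OF ab contg contw der]
  have vel: "Lp_norm M p (curve_velocity \<gamma> t) = Lp_norm M p (w t)" if t: "t \<in> {a<..<b}" for t
  proof (rule Lp_cong)
    fix x assume x: "x \<in> space M"
    have t': "t \<in> {a..b}" using t by auto
    have "((\<lambda>s. \<gamma> s x) has_vector_derivative w t x) (at t within {a<..<b})"
      by (rule has_vector_derivative_within_subset[OF der[OF x t']]) auto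
    then have "((\<lambda>s. \<gamma> s x) has_vector_derivative w t x) (at t)"
      using has_vector_derivative_within_open[OF t open_greaterThanLessThan] by blast
    then show "curve_velocity \<gamma> t x = w t x"
      unfolding curve_velocity_def by (rule vector_derivative_at)
  qed
  have iw: "(\<lambda>t. Lp_norm M p (w t)) integrable_on {a<..<b}"
    using integrable_continuous_interval[OF ub(1)] integrable_on_open_interval_real by blast
  have iS: "(\<lambda>t. Lp_norm M p (curve_velocity \<gamma> t)) integrable_on {a<..<b}"
    using iw integrable_cong[of "{a<..<b}" "\<lambda>t. Lp_norm M p (curve_velocity \<gamma> t)" "\<lambda>t. Lp_norm M p (w t)"] vel by blast
  show "(\<lambda>t. Lp_norm M p (curve_velocity \<gamma> t)) integrable_on {a..b}"
    using iS integrable_on_open_interval_real by blast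
  have "integral {a..b} (\<lambda>t. Lp_norm M p (curve_velocity \<gamma> t)) = integral {a<..<b} (\<lambda>t. Lp_norm M p (curve_velocity \<gamma> t))"
    by (rule integral_open_interval_real)
  also have "\<dots> = integral {a<..<b} (\<lambda>t. Lp_norm M p (w t))"
    by (rule integral_cong) (rule vel)
  also have "\<dots> = integral {a..b} (\<lambda>t. Lp_norm M p (w t))"
    by (rule integral_open_interval_real[symmetric])
  finally show "Lp_norm M p (\<lambda>x. \<gamma> b x - \<gamma> a x) \<le> integral {a..b} (\<lambda>t. Lp_norm M p (curve_velocity \<gamma> t))"
    using ub(2) by simp
qed

lemma curve_ub:
  fixes \<gamma> :: "real \<Rightarrow> 'a \<Rightarrow> real"
  assumes pwc: "piecewise_smooth_curve X A \<gamma>" and sp: "\<forall>t\<in>{0..1}. \<gamma> t \<in> sphere_plus X A M p q r"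
  shows "Lp_norm M p (\<lambda>x. \<gamma> 1 x - \<gamma> 0 x) \<le> curve_length M p \<gamma>"
proof -
  obtain D where D0: "finite D \<and> {0, 1} \<subseteq> D \<and> D \<subseteq> {0..1} \<and>
        (\<forall>a\<in>D. \<forall>b\<in>D. a < b \<and> {a<..<b} \<inter> D = {} \<longrightarrow> smooth_curve_on X A a b \<gamma>)"
    using pwc unfolding piecewise_smooth_curve_def by (elim exE) (rule that)
  have D: "finite D" "{0, 1} \<subseteq> D" "D \<subseteq> {0..1}"
    "\<And>a b. a \<in> D \<Longrightarrow> b \<in> D \<Longrightarrow> a < b \<Longrightarrow> {a<..<b} \<inter> D = {} \<Longrightarrow> smooth_curve_on X A a b \<gamma>"
    using D0 by simp_all
  define S where "S t = Lp_norm M p (curve_velocity \<gamma> t)" for t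
  have good: "good (\<gamma> t)" if "t \<in> {0..1}" for t
    using cont_good Cinf_cont[OF sph(1)[OF sp[rule_format, OF that]]] spaceX by simp
  have main: "S integrable_on {0..c} \<and> Lp_norm M p (\<lambda>x. \<gamma> c x - \<gamma> 0 x) \<le> integral {0..c} S"
    if "c \<in> D" for c
    using that
  proof (induct "card {d \<in> D. d < c}" arbitrary: c rule: less_induct)
    case less
    have c01: "c \<in> {0..1}" using less.prems D(3) by auto
    show ?case
    proof (cases "c = 0")
      case True
      have "Lp_norm M p (\<lambda>x. \<gamma> c x - \<gamma> 0 x) = 0" using True Lp_const[of 0] by simp
      moreover have "S integrable_on {0..0::real}" using integrable_on_refl[of S 0] by simp
      ultimately show ?thesis using True by simp
    next
      case False
      then have cpos: "c > 0" using c01 by simp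
      define P where "P = {d \<in> D. d < c}"
      have Pf: "finite P" "P \<noteq> {}" using D(1,2) cpos by (auto simp: P_def)
      define c' where "c' = Max P"
      have c'P: "c' \<in> P" using Pf by (simp add: c'_def)
      then have c': "c' \<in> D" "c' < c" by (auto simp: P_def)
      have c'01: "c' \<in> {0..1}" using c' D(3) by auto
      have gap: "{c'<..<c} \<inter> D = {}"
      proof (rule ccontr)
        assume "{c'<..<c} \<inter> D \<noteq> {}"
        then obtain d where "d \<in> D" "c' < d" "d < c" by auto
        then have "d \<in> P" by (simp add: P_def)
        then have "d \<le> c'" using Pf by (simp add: c'_def)
        with \<open>c' < d\<close> show False by simp
      qed
      have sub1: "{d \<in> D. d < c'} \<subseteq> P" unfolding P_def using c'(2) by auto
      have "c' \<notin> {d \<in> D. d < c'}" by simp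
      then have sub: "{d \<in> D. d < c'} \<subset> P" using sub1 c'P by blast
      have lt: "card {d \<in> D. d < c'} < card {d \<in> D. d < c}"
        using psubset_card_mono[OF Pf(1) sub] by (simp add: P_def)
      have IH: "S integrable_on {0..c'} \<and> Lp_norm M p (\<lambda>x. \<gamma> c' x - \<gamma> 0 x) \<le> integral {0..c'} S"
        by (rule less.hyps[OF lt c'(1)])
      have sc: "smooth_curve_on X A c' c \<gamma>" by (rule D(4)[OF c'(1) less.prems c'(2) gap])
      note pc = piece[OF c'(2) sc]
      have c'0: "0 \<le> c'" using c'01 by simp
      have iS: "S integrable_on {0..c}"
        using Henstock_Kurzweil_Integration.integrable_combine[OF c'0 less_imp_le[OF c'(2)]] IH pc(1)
        unfolding S_def[abs_def] by blast
      have "Lp_norm M p (\<lambda>x. \<gamma> c x - \<gamma> 0 x) = Lp_norm M p (\<lambda>x. (\<gamma> c' x - \<gamma> 0 x) + (\<gamma> c x - \<gamma> c' x))"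
        by (rule Lp_cong) simp
      also have "\<dots> \<le> Lp_norm M p (\<lambda>x. \<gamma> c' x - \<gamma> 0 x) + Lp_norm M p (\<lambda>x. \<gamma> c x - \<gamma> c' x)"
      proof -
        have z01: "(0::real) \<in> {0..1}" by simp
        show ?thesis
          by (rule Lp_triangle[OF good_diff[OF good[OF c'01] good[OF z01]] good_diff[OF good[OF c01] good[OF c'01]]])
      qed
      also have "\<dots> \<le> integral {0..c'} S + integral {c'..c} S"
        using IH pc(2) by (simp add: S_def[abs_def] add_mono)
      also have "\<dots> = integral {0..c} S"
        by (rule Henstock_Kurzweil_Integration.integral_combine[OF c'0 less_imp_le[OF c'(2)] iS])
      finally show ?thesis using iS by simp
    qed
  qed
  have "1 \<in> D" using D(2) by simp
  from main[OF this] show ?thesis by (simp add: curve_length_def S_def[abs_def])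
qed

end

context setting
begin

lemma Lp_swap: "Lp_norm M p (\<lambda>x. f1 x - f0 x) = Lp_norm M p (\<lambda>x. f0 x - f1 x)"
proof -
  have "Lp_norm M p (\<lambda>x. f1 x - f0 x) = Lp_norm M p (\<lambda>x. (-1) * (f0 x - f1 x))" by (rule Lp_cong) simp
  also have "\<dots> = \<bar>-1\<bar> * Lp_norm M p (\<lambda>x. f0 x - f1 x)" by (rule Lp_cmult)
  finally show ?thesis by simp
qed

lemma dist_props:
  assumes f0: "f0 \<in> sphere_plus X A M p q r" and f1: "f1 \<in> sphere_plus X A M p q r"
  shows "Lp_norm M p (\<lambda>x. f0 x - f1 x) \<le> dist_sphere X A M p q r f0 f1"
    and "dist_sphere X A M p q r f0 f1 \<le> 2 * \<sigma> * Lp_norm M p (\<lambda>x. f0 x - f1 x)"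
    and "0 \<le> dist_sphere X A M p q r f0 f1"
proof -
  define C where "C = {curve_length M p \<gamma> | \<gamma>. piecewise_smooth_curve X A \<gamma> \<and>
            (\<forall>t\<in>{0..1}. \<gamma> t \<in> sphere_plus X A M p q r) \<and> \<gamma> 0 = f0 \<and> \<gamma> 1 = f1}"
  have dC: "dist_sphere X A M p q r f0 f1 = Inf C" by (simp add: dist_sphere_def C_def)
  have pmC: "curve_length M p (pm f0 f1) \<in> C"
    unfolding C_def mem_Collect_eq
    by (rule exI[of _ "pm f0 f1"]) (use pm_pw[OF f0 f1] pm_sphere[OF f0 f1] pm_ends[OF f0 f1] in simp)
  have lb: "Lp_norm M p (\<lambda>x. f0 x - f1 x) \<le> y" if yC: "y \<in> C" for y
  proof -
    obtain \<gamma> where g0: "y = curve_length M p \<gamma> \<and> piecewise_smooth_curve X A \<gamma> \<and>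
      (\<forall>t\<in>{0..1}. \<gamma> t \<in> sphere_plus X A M p q r) \<and> \<gamma> 0 = f0 \<and> \<gamma> 1 = f1"
      using yC unfolding C_def mem_Collect_eq by (elim exE) (rule that)
    then have g: "y = curve_length M p \<gamma>" "piecewise_smooth_curve X A \<gamma>"
      "\<forall>t\<in>{0..1}. \<gamma> t \<in> sphere_plus X A M p q r" "\<gamma> 0 = f0" "\<gamma> 1 = f1" by simp_all
    have "Lp_norm M p (\<lambda>x. \<gamma> 1 x - \<gamma> 0 x) \<le> curve_length M p \<gamma>" by (rule curve_ub[OF g(2,3)])
    then show ?thesis using g Lp_swap[of f1 f0] by simp
  qed
  show a: "Lp_norm M p (\<lambda>x. f0 x - f1 x) \<le> dist_sphere X A M p q r f0 f1"
    unfolding dC using pmC lb by (intro cInf_greatest) auto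
  have bb: "bdd_below C" by (rule bdd_belowI[where m="Lp_norm M p (\<lambda>x. f0 x - f1 x)"]) (rule lb)
  have "Inf C \<le> curve_length M p (pm f0 f1)"
    by (rule cInf_lower[OF pmC bb])
  also have "\<dots> \<le> 2 * \<sigma> * Lp_norm M p (\<lambda>x. f1 x - f0 x)" by (rule pm_length[OF f0 f1])
  finally show "dist_sphere X A M p q r f0 f1 \<le> 2 * \<sigma> * Lp_norm M p (\<lambda>x. f0 x - f1 x)"
    unfolding dC using Lp_swap[of f1 f0] by simp
  show "0 \<le> dist_sphere X A M p q r f0 f1" using a Lp_nonneg by (rule order_trans[rotated])
qed

lemma main:
  assumes f: "f \<in> sphere_plus X A M p q r"
  shows "\<exists>C>0. \<forall>f0\<in>sphere_plus X A M p q r. \<forall>f1\<in>sphere_plus X A M p q r.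
           C / (dist_sphere X A M p q r f f0 + dist_sphere X A M p q r f f1 + 1)
             * dist_sphere X A M p q r f0 f1
           \<le> Lp_norm M p (\<lambda>x. f0 x - f1 x)
         \<and> Lp_norm M p (\<lambda>x. f0 x - f1 x) \<le> dist_sphere X A M p q r f0 f1"
proof (intro exI[of _ "1 / (2 * \<sigma>)"] conjI ballI)
  have s: "\<sigma> > 0" using sig1 by simp
  show "0 < 1 / (2 * \<sigma>)" using s by simp
  fix f0 f1 assume f0: "f0 \<in> sphere_plus X A M p q r" and f1: "f1 \<in> sphere_plus X A M p q r"
  show "Lp_norm M p (\<lambda>x. f0 x - f1 x) \<le> dist_sphere X A M p q r f0 f1" by (rule dist_props(1)[OF f0 f1])
  define D where "D = dist_sphere X A M p q r f f0 + dist_sphere X A M p q r f f1"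
  have D: "0 \<le> D" unfolding D_def using dist_props(3)[OF f f0] dist_props(3)[OF f f1] by simp
  define d where "d = dist_sphere X A M p q r f0 f1"
  have d: "0 \<le> d" "d \<le> 2 * \<sigma> * Lp_norm M p (\<lambda>x. f0 x - f1 x)"
    unfolding d_def using dist_props(2,3)[OF f0 f1] by auto
  have "1 / (2 * \<sigma>) / (D + 1) * d \<le> 1 / (2 * \<sigma>) * d"
  proof -
    have "1 / (2 * \<sigma>) / (D + 1) \<le> 1 / (2 * \<sigma>)" using D s by (simp add: divide_le_eq field_simps)
    then show ?thesis using d(1) by (rule mult_right_mono)
  qed
  also have "\<dots> \<le> 1 / (2 * \<sigma>) * (2 * \<sigma> * Lp_norm M p (\<lambda>x. f0 x - f1 x))"
    using d(2) s by (intro mult_left_mono) auto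
  also have "\<dots> = Lp_norm M p (\<lambda>x. f0 x - f1 x)" using s by simp
  finally show "1 / (2 * \<sigma>) / (dist_sphere X A M p q r f f0 + dist_sphere X A M p q r f f1 + 1)
             * dist_sphere X A M p q r f0 f1 \<le> Lp_norm M p (\<lambda>x. f0 x - f1 x)"
    by (simp add: D_def d_def)
qed

end

theorem proposition2p1:
  fixes X :: "'a::t2_space set"
    and A :: "('a set \<times> ('a \<Rightarrow> 'n::euclidean_space)) set"
    and M :: "'a measure"
    and p q r :: real
    and f :: "'a \<Rightarrow> real"
  assumes "1 \<le> q" and "q \<le> p"
    and "compact_smooth_manifold X A"
    and "sets M = sets (restrict_space borel X)"
    and "emeasure M X < \<infinity>" and "emeasure M X > 0"
    and "r > 0"
    and "f \<in> sphere_plus X A M p q r"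
  shows "\<exists>C>0. \<forall>f0\<in>sphere_plus X A M p q r. \<forall>f1\<in>sphere_plus X A M p q r.
           C / (dist_sphere X A M p q r f f0 + dist_sphere X A M p q r f f1 + 1)
             * dist_sphere X A M p q r f0 f1
           \<le> Lp_norm M p (\<lambda>x. f0 x - f1 x)
         \<and> Lp_norm M p (\<lambda>x. f0 x - f1 x) \<le> dist_sphere X A M p q r f0 f1"
proof -
  have sp: "space M = X"
    using sets_eq_imp_space_eq[OF assms(4)] by (simp add: space_restrict_space)
  have fm: "finite_measure M"
    by (rule finite_measureI) (use assms(5) sp in auto)
  then interpret finite_measure M .
  have mpos: "measure M (space M) > 0"
    using assms(6) sp emeasure_eq_measure[of X] by simp
  interpret S: setting X A M p q r
  proof unfold_locales
    show "1 \<le> p" using assms(1,2) by simp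
    show "0 < measure M (space M)" by (rule mpos)
    show "sets M = sets (restrict_space borel (space M))" using assms(4) sp by simp
    show "compact (space M)" using assms(3) sp by (simp add: compact_smooth_manifold_def)
    show "compact_smooth_manifold X A" by (rule assms(3))
    show "space M = X" by (rule sp)
    show "1 \<le> q" "q \<le> p" "0 < r" using assms by simp_all
  qed
  show ?thesis by (rule S.main[OF assms(8)])
qed

end
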